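(* (Work in $\mathsf{ZFC}$.) Let $\mathcal S$ be a countable vocabulary of function and predicate symbols of finite arity containing $=,\neq,\in,\notin$, let $T$ be a set of $\Sigma(L_{\omega\omega}(\mathcal S))$ conditionals, and let $\chi\Rightarrow\chi'$ be a $\Sigma(L_{\omega\omega}(\mathcal S))$ conditional. Then either $\chi\Rightarrow\chi'$ has a finitary positivistic proof from the axioms of $T$ together with the logical axioms (P1)–(P23) below, or there is an admissible structure modelling every conditional of $T$ in which $\chi\Rightarrow\chi'$ fails for some tuple of elements. Logical axioms (no distinction between free and bound variables; $x,y,z$ are variables, $\phi,\psi,\chi$ arbitrary $\Sigma$ formulas): (P1) $\phi\Rightarrow\top$; (P2) $\bot\Rightarrow\psi$; (P3) $\phi\wedge\psi\Rightarrow\phi$; (P4) $\phi\wedge\psi\Rightarrow\psi$; (P5) $\phi\Rightarrow\phi\wedge\phi$; (P6) $\phi\Rightarrow\phi\vee\psi$; (P7) $\psi\Rightarrow\phi\vee\psi$; (P8) $\psi\vee\psi\Rightarrow\psi$; (P9) $(\phi\vee\psi)\wedge\chi\Rightarrow(\phi\wedge\chi)\vee(\psi\wedge\chi)$; (P10) $\phi\Rightarrow\exists x\,\phi$; (P11) $\exists y\,\psi\Rightarrow\psi$ for $y$ not free in $\psi$; (P12) $\chi\wedge\exists y\,\phi\Rightarrow\exists y\,(\chi\wedge\phi)$ for $y$ not free in $\chi$; (P13) $x\in z\wedge\forall x\in z\,\phi\Rightarrow\phi$; (P14) $\psi\Rightarrow\forall y\in z\,(\psi\wedge y\in z)$ for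 $y$ not free in $\psi$; (P15) $\forall y\in z\,(\chi\vee\phi)\Rightarrow\chi\vee\forall y\in z\,\phi$ for $y$ not free in $\chi$; (P16) $\top\Rightarrow x\in y\vee x\notin y$; (P17) $x\in y\wedge x\notin y\Rightarrow\bot$; (P18) $\top\Rightarrow x=y\vee x\neq y$; (P19) $x=y\wedge x\neq y\Rightarrow\bot$; (P20) $\top\Rightarrow x=x$; (P21) $x=y\Rightarrow y=x$; (P22) $x=y\wedge y=z\Rightarrow x=z$; (P23) $x=y\wedge\phi^z_x\Rightarrow\phi^z_y$ for $x,y$ substitutable for $z$ in $\phi$.
   Context: $\Sigma(L_{\omega\omega}(\mathcal S))$ formulas: built from atomic formulas of $\mathcal S$ (including $\top,\bot$; $\neq,\notin$ are primitive predicate symbols) using binary $\wedge$, binary $\vee$, bounded universal quantification $\forall x\in t\,\phi$, and unbounded existential quantification $\exists x\,\phi$; no negation or implication. A conditional is an expression $\phi\Rightarrow\psi$ with $\phi,\psi$ $\Sigma$ formulas. An application of a conditional $\phi(v_1,\dots,v_n)\Rightarrow\psi(v_1,\dots,v_n)$ (with $v_1,\dots,v_n$ its free variables) is a pair $(\chi_0,\chi_1)$ of $\Sigma$ formulas such that $\chi_1$ is obtained from $\chi_0$ by replacing one occurrence of a subformula of the form $\phi(t_1,\dots,t_n)$ by $\psi(t_1,\dots,t_n)$ (substitution of the $t_i$ for the free occurrences of the $v_i$), where the terms $t_i$ may contain variables bound in $\chi_0$. A finitary positivistic proof of $\chi\Rightarrow\chi'$ from a set of axioms (conditionals) is a finite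 sequence $\chi=\chi_0,\dots,\chi_n=\chi'$ of $\Sigma$ formulas with each $(\chi_i,\chi_{i+1})$ an application of some axiom. An admissible structure interprets $=$ as true equality, $\neq$ as its complement, and $\notin$ as the complement of $\in$. A structure models a conditional if it satisfies the universal closure of $\phi\to\psi$. *)

theory Defs
  imports "HOL-Library.Countable"
begin

datatype 'f trm = Var nat | Fn 'f "'f trm list"

datatype 'p pred = PEq | PNeq | PIn | PNotin | PSym 'p

datatype ('f, 'p) fm =
    Top
  | Bot
  | Atom "'p pred" "'f trm list"
  | Conj "('f, 'p) fm" "('f, 'p) fm"
  | Disj "('f, 'p) fm" "('f, 'p) fm"
  | BAll nat "'f trm" "('f, 'p) fm"
  | Ex nat "('f, 'p) fm"

primrec pred_arity :: "('p \<Rightarrow> nat) \<Rightarrow> 'p pred \<Rightarrow> nat" where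
  "pred_arity PA PEq = 2"
| "pred_arity PA PNeq = 2"
| "pred_arity PA PIn = 2"
| "pred_arity PA PNotin = 2"
| "pred_arity PA (PSym p) = PA p"

primrec twf :: "('f \<Rightarrow> nat) \<Rightarrow> 'f trm \<Rightarrow> bool" where
  "twf FA (Var x) = True"
| "twf FA (Fn f ts) = (length ts = FA f \<and> list_all (twf FA) ts)"

primrec fwf :: "('f \<Rightarrow> nat) \<Rightarrow> ('p \<Rightarrow> nat) \<Rightarrow> ('f, 'p) fm \<Rightarrow> bool" where
  "fwf FA PA Top = True"
| "fwf FA PA Bot = True"
| "fwf FA PA (Atom p ts) = (length ts = pred_arity PA p \<and> list_all (twf FA) ts)"
| "fwf FA PA (Conj \<phi> \<psi>) = (fwf FA PA \<phi> \<and> fwf FA PA \<psi>)"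
| "fwf FA PA (Disj \<phi> \<psi>) = (fwf FA PA \<phi> \<and> fwf FA PA \<psi>)"
| "fwf FA PA (BAll x t \<phi>) = (twf FA t \<and> fwf FA PA \<phi>)"
| "fwf FA PA (Ex x \<phi>) = fwf FA PA \<phi>"

primrec tvars :: "'f trm \<Rightarrow> nat set" where
  "tvars (Var x) = {x}"
| "tvars (Fn f ts) = \<Union> (set (map tvars ts))"

primrec fv :: "('f, 'p) fm \<Rightarrow> nat set" where
  "fv Top = {}"
| "fv Bot = {}"
| "fv (Atom p ts) = \<Union> (set (map tvars ts))"
| "fv (Conj \<phi> \<psi>) = fv \<phi> \<union> fv \<psi>"
| "fv (Disj \<phi> \<psi>) = fv \<phi> \<union> fv \<psi>"
| "fv (BAll x t \<phi>) = tvars t \<union> (fv \<phi> - {x})"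
| "fv (Ex x \<phi>) = fv \<phi> - {x}"

primrec tsubst :: "(nat \<Rightarrow> 'f trm) \<Rightarrow> 'f trm \<Rightarrow> 'f trm" where
  "tsubst \<sigma> (Var x) = \<sigma> x"
| "tsubst \<sigma> (Fn f ts) = Fn f (map (tsubst \<sigma>) ts)"

primrec subst :: "(nat \<Rightarrow> 'f trm) \<Rightarrow> ('f, 'p) fm \<Rightarrow> ('f, 'p) fm" where
  "subst \<sigma> Top = Top"
| "subst \<sigma> Bot = Bot"
| "subst \<sigma> (Atom p ts) = Atom p (map (tsubst \<sigma>) ts)"
| "subst \<sigma> (Conj \<phi> \<psi>) = Conj (subst \<sigma> \<phi>) (subst \<sigma> \<psi>)"
| "subst \<sigma> (Disj \<phi> \<psi>) = Disj (subst \<sigma> \<phi>) (subst \<sigma> \<psi>)"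
| "subst \<sigma> (BAll x t \<phi>) = BAll x (tsubst \<sigma> t) (subst (\<sigma>(x := Var x)) \<phi>)"
| "subst \<sigma> (Ex x \<phi>) = Ex x (subst (\<sigma>(x := Var x)) \<phi>)"

primrec substble :: "(nat \<Rightarrow> 'f trm) \<Rightarrow> ('f, 'p) fm \<Rightarrow> bool" where
  "substble \<sigma> Top = True"
| "substble \<sigma> Bot = True"
| "substble \<sigma> (Atom p ts) = True"
| "substble \<sigma> (Conj \<phi> \<psi>) = (substble \<sigma> \<phi> \<and> substble \<sigma> \<psi>)"
| "substble \<sigma> (Disj \<phi> \<psi>) = (substble \<sigma> \<phi> \<and> substble \<sigma> \<psi>)"
| "substble \<sigma> (BAll x t \<phi>) =
     (substble (\<sigma>(x := Var x)) \<phi> \<and> (\<forall>v \<in> fv \<phi> - {x}. x \<notin> tvars (\<sigma> v)))"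
| "substble \<sigma> (Ex x \<phi>) =
     (substble (\<sigma>(x := Var x)) \<phi> \<and> (\<forall>v \<in> fv \<phi> - {x}. x \<notin> tvars (\<sigma> v)))"

datatype ('f, 'p) ctx =
    Hole
  | CConjL "('f, 'p) ctx" "('f, 'p) fm"
  | CConjR "('f, 'p) fm" "('f, 'p) ctx"
  | CDisjL "('f, 'p) ctx" "('f, 'p) fm"
  | CDisjR "('f, 'p) fm" "('f, 'p) ctx"
  | CBAll nat "'f trm" "('f, 'p) ctx"
  | CEx nat "('f, 'p) ctx"

primrec plug :: "('f, 'p) ctx \<Rightarrow> ('f, 'p) fm \<Rightarrow> ('f, 'p) fm" where
  "plug Hole \<theta> = \<theta>"
| "plug (CConjL C \<psi>) \<theta> = Conj (plug C \<theta>) \<psi>"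
| "plug (CConjR \<phi> C) \<theta> = Conj \<phi> (plug C \<theta>)"
| "plug (CDisjL C \<psi>) \<theta> = Disj (plug C \<theta>) \<psi>"
| "plug (CDisjR \<phi> C) \<theta> = Disj \<phi> (plug C \<theta>)"
| "plug (CBAll x t C) \<theta> = BAll x t (plug C \<theta>)"
| "plug (CEx x C) \<theta> = Ex x (plug C \<theta>)"

type_synonym ('f, 'p) cond = "('f, 'p) fm \<times> ('f, 'p) fm"

definition application :: "('f, 'p) cond \<Rightarrow> ('f, 'p) fm \<Rightarrow> ('f, 'p) fm \<Rightarrow> bool" where
  "application c \<chi>0 \<chi>1 \<longleftrightarrow>
     (\<exists>C \<sigma>. substble \<sigma> (fst c) \<and> substble \<sigma> (snd c) \<and>
            \<chi>0 = plug C (subst \<sigma> (fst c)) \<and> \<chi>1 = plug C (subst \<sigma> (snd c)))"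

abbreviation vIn :: "nat \<Rightarrow> nat \<Rightarrow> ('f, 'p) fm" where
  "vIn x y \<equiv> Atom PIn [Var x, Var y]"
abbreviation vNotin :: "nat \<Rightarrow> nat \<Rightarrow> ('f, 'p) fm" where
  "vNotin x y \<equiv> Atom PNotin [Var x, Var y]"
abbreviation vEq :: "nat \<Rightarrow> nat \<Rightarrow> ('f, 'p) fm" where
  "vEq x y \<equiv> Atom PEq [Var x, Var y]"
abbreviation vNeq :: "nat \<Rightarrow> nat \<Rightarrow> ('f, 'p) fm" where
  "vNeq x y \<equiv> Atom PNeq [Var x, Var y]"

inductive_set logax :: "('f \<Rightarrow> nat) \<Rightarrow> ('p \<Rightarrow> nat) \<Rightarrow> ('f, 'p) cond set"
  for FA PA where
  P1: "fwf FA PA \<phi> \<Longrightarrow> (\<phi>, Top) \<in> logax FA PA"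
| P2: "fwf FA PA \<psi> \<Longrightarrow> (Bot, \<psi>) \<in> logax FA PA"
| P3: "fwf FA PA \<phi> \<Longrightarrow> fwf FA PA \<psi> \<Longrightarrow> (Conj \<phi> \<psi>, \<phi>) \<in> logax FA PA"
| P4: "fwf FA PA \<phi> \<Longrightarrow> fwf FA PA \<psi> \<Longrightarrow> (Conj \<phi> \<psi>, \<psi>) \<in> logax FA PA"
| P5: "fwf FA PA \<phi> \<Longrightarrow> (\<phi>, Conj \<phi> \<phi>) \<in> logax FA PA"
| P6: "fwf FA PA \<phi> \<Longrightarrow> fwf FA PA \<psi> \<Longrightarrow> (\<phi>, Disj \<phi> \<psi>) \<in> logax FA PA"
| P7: "fwf FA PA \<phi> \<Longrightarrow> fwf FA PA \<psi> \<Longrightarrow> (\<psi>, Disj \<phi> \<psi>) \<in> logax FA PA"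
| P8: "fwf FA PA \<psi> \<Longrightarrow> (Disj \<psi> \<psi>, \<psi>) \<in> logax FA PA"
| P9: "fwf FA PA \<phi> \<Longrightarrow> fwf FA PA \<psi> \<Longrightarrow> fwf FA PA \<chi> \<Longrightarrow>
       (Conj (Disj \<phi> \<psi>) \<chi>, Disj (Conj \<phi> \<chi>) (Conj \<psi> \<chi>)) \<in> logax FA PA"
| P10: "fwf FA PA \<phi> \<Longrightarrow> (\<phi>, Ex x \<phi>) \<in> logax FA PA"
| P11: "fwf FA PA \<psi> \<Longrightarrow> y \<notin> fv \<psi> \<Longrightarrow> (Ex y \<psi>, \<psi>) \<in> logax FA PA"
| P12: "fwf FA PA \<chi> \<Longrightarrow> fwf FA PA \<phi> \<Longrightarrow> y \<notin> fv \<chi> \<Longrightarrow>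
        (Conj \<chi> (Ex y \<phi>), Ex y (Conj \<chi> \<phi>)) \<in> logax FA PA"
| P13: "fwf FA PA \<phi> \<Longrightarrow> (Conj (vIn x z) (BAll x (Var z) \<phi>), \<phi>) \<in> logax FA PA"
| P14: "fwf FA PA \<psi> \<Longrightarrow> y \<notin> fv \<psi> \<Longrightarrow>
        (\<psi>, BAll y (Var z) (Conj \<psi> (vIn y z))) \<in> logax FA PA"
| P15: "fwf FA PA \<chi> \<Longrightarrow> fwf FA PA \<phi> \<Longrightarrow> y \<notin> fv \<chi> \<Longrightarrow>
        (BAll y (Var z) (Disj \<chi> \<phi>), Disj \<chi> (BAll y (Var z) \<phi>)) \<in> logax FA PA"
| P16: "(Top, Disj (vIn x y) (vNotin x y)) \<in> logax FA PA"
| P17: "(Conj (vIn x y) (vNotin x y), Bot) \<in> logax FA PA"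
| P18: "(Top, Disj (vEq x y) (vNeq x y)) \<in> logax FA PA"
| P19: "(Conj (vEq x y) (vNeq x y), Bot) \<in> logax FA PA"
| P20: "(Top, vEq x x) \<in> logax FA PA"
| P21: "(vEq x y, vEq y x) \<in> logax FA PA"
| P22: "(Conj (vEq x y) (vEq y z), vEq x z) \<in> logax FA PA"
| P23: "fwf FA PA \<phi> \<Longrightarrow> substble (Var(z := Var x)) \<phi> \<Longrightarrow> substble (Var(z := Var y)) \<phi> \<Longrightarrow>
        (Conj (vEq x y) (subst (Var(z := Var x)) \<phi>), subst (Var(z := Var y)) \<phi>) \<in> logax FA PA"

definition fp_proof ::
  "('f \<Rightarrow> nat) \<Rightarrow> ('p \<Rightarrow> nat) \<Rightarrow> ('f, 'p) cond set \<Rightarrow> ('f, 'p) fm list \<Rightarrow> ('f, 'p) fm \<Rightarrow> ('f, 'p) fm \<Rightarrow> bool"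
  where
  "fp_proof FA PA T xs \<chi> \<chi>' \<longleftrightarrow>
     xs \<noteq> [] \<and> hd xs = \<chi> \<and> last xs = \<chi>' \<and> list_all (fwf FA PA) xs \<and>
     (\<forall>i. Suc i < length xs \<longrightarrow>
        (\<exists>c \<in> T \<union> logax FA PA. application c (xs ! i) (xs ! Suc i)))"

definition fp_provable ::
  "('f \<Rightarrow> nat) \<Rightarrow> ('p \<Rightarrow> nat) \<Rightarrow> ('f, 'p) cond set \<Rightarrow> ('f, 'p) fm \<Rightarrow> ('f, 'p) fm \<Rightarrow> bool"
  where
  "fp_provable FA PA T \<chi> \<chi>' \<longleftrightarrow> (\<exists>xs. fp_proof FA PA T xs \<chi> \<chi>')"

datatype ('f, 'p) struc =
  Struc (dom: "nat set") (fint: "'f \<Rightarrow> nat list \<Rightarrow> nat") (pint: "'p pred \<Rightarrow> nat list \<Rightarrow> bool")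

definition is_structure :: "('f \<Rightarrow> nat) \<Rightarrow> ('f, 'p) struc \<Rightarrow> bool" where
  "is_structure FA M \<longleftrightarrow> dom M \<noteq> {} \<and>
     (\<forall>f as. length as = FA f \<longrightarrow> set as \<subseteq> dom M \<longrightarrow> fint M f as \<in> dom M)"

definition admissible :: "('f \<Rightarrow> nat) \<Rightarrow> ('f, 'p) struc \<Rightarrow> bool" where
  "admissible FA M \<longleftrightarrow> is_structure FA M \<and>
     (\<forall>a \<in> dom M. \<forall>b \<in> dom M.
        (pint M PEq [a, b] \<longleftrightarrow> a = b) \<and>
        (pint M PNeq [a, b] \<longleftrightarrow> a \<noteq> b) \<and>
        (pint M PNotin [a, b] \<longleftrightarrow> \<not> pint M PIn [a, b]))"

primrec teval :: "('f, 'p) struc \<Rightarrow> (nat \<Rightarrow> nat) \<Rightarrow> 'f trm \<Rightarrow> nat" where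
  "teval M e (Var x) = e x"
| "teval M e (Fn f ts) = fint M f (map (teval M e) ts)"

primrec sat :: "('f, 'p) struc \<Rightarrow> (nat \<Rightarrow> nat) \<Rightarrow> ('f, 'p) fm \<Rightarrow> bool" where
  "sat M e Top = True"
| "sat M e Bot = False"
| "sat M e (Atom p ts) = pint M p (map (teval M e) ts)"
| "sat M e (Conj \<phi> \<psi>) = (sat M e \<phi> \<and> sat M e \<psi>)"
| "sat M e (Disj \<phi> \<psi>) = (sat M e \<phi> \<or> sat M e \<psi>)"
| "sat M e (BAll x t \<phi>) =
     (\<forall>a \<in> dom M. pint M PIn [a, teval M e t] \<longrightarrow> sat M (e(x := a)) \<phi>)"
| "sat M e (Ex x \<phi>) = (\<exists>a \<in> dom M. sat M (e(x := a)) \<phi>)"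

definition assignment :: "('f, 'p) struc \<Rightarrow> (nat \<Rightarrow> nat) \<Rightarrow> bool" where
  "assignment M e \<longleftrightarrow> range e \<subseteq> dom M"

definition models_cond :: "('f, 'p) struc \<Rightarrow> ('f, 'p) cond \<Rightarrow> bool" where
  "models_cond M c \<longleftrightarrow> (\<forall>e. assignment M e \<longrightarrow> sat M e (fst c) \<longrightarrow> sat M e (snd c))"

end

theory Submission
  imports Defs
begin


instance trm :: (countable) countable by countable_datatype
instance pred :: (countable) countable by countable_datatype
instance fm :: (countable, countable) countable by countable_datatype


primrec bnd :: "('f,'p) fm \<Rightarrow> nat set" where
  "bnd Top = {}" | "bnd Bot = {}" | "bnd (Atom p ts) = {}"
| "bnd (Conj a b) = bnd a \<union> bnd b" | "bnd (Disj a b) = bnd a \<union> bnd b"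
| "bnd (BAll x t a) = insert x (bnd a)" | "bnd (Ex x a) = insert x (bnd a)"

lemma finite_tvars[simp]: "finite (tvars t)"
  by (induction t) auto
lemma finite_fv[simp]: "finite (fv \<phi>)"
  by (induction \<phi>) auto
lemma finite_bnd[simp]: "finite (bnd \<phi>)"
  by (induction \<phi>) auto

lemma tsubst_cong: "(\<And>v. v \<in> tvars t \<Longrightarrow> \<sigma> v = \<sigma>' v) \<Longrightarrow> tsubst \<sigma> t = tsubst \<sigma>' t"
  by (induction t) auto
lemma tsubst_Var[simp]: "tsubst Var t = t"
  by (induction t) (auto simp: map_idI)
lemma tvars_tsubst: "tvars (tsubst \<sigma> t) = (\<Union>v\<in>tvars t. tvars (\<sigma> v))"
  by (induction t) auto
lemma tsubst_comp: "tsubst \<sigma> (tsubst \<tau> t) = tsubst (\<lambda>v. tsubst \<sigma> (\<tau> v)) t"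
  by (induction t) auto
lemma twf_tsubst: "twf FA t \<Longrightarrow> (\<forall>v. twf FA (\<sigma> v)) \<Longrightarrow> twf FA (tsubst \<sigma> t)"
  by (induction t) (auto simp: list_all_iff)
lemma subst_cong: "(\<And>v. v \<in> fv \<phi> \<Longrightarrow> \<sigma> v = \<sigma>' v) \<Longrightarrow> subst \<sigma> \<phi> = subst \<sigma>' \<phi>"
proof (induction \<phi> arbitrary: \<sigma> \<sigma>')
  case (Atom p ts)
  have "map (tsubst \<sigma>) ts = map (tsubst \<sigma>') ts"
  proof (rule map_cong[OF refl], rule tsubst_cong)
    fix t v assume "t \<in> set ts" "v \<in> tvars t"
    then show "\<sigma> v = \<sigma>' v" using Atom by auto
  qed
  then show ?case by simp
next
  case (BAll x t \<phi>)
  have "subst (\<sigma>(x := Var x)) \<phi> = subst (\<sigma>'(x := Var x)) \<phi>" by (rule BAll.IH) (use BAll.prems in auto)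
  moreover have "tsubst \<sigma> t = tsubst \<sigma>' t" by (rule tsubst_cong) (use BAll.prems in auto)
  ultimately show ?case by simp
next
  case (Ex x \<phi>)
  have "subst (\<sigma>(x := Var x)) \<phi> = subst (\<sigma>'(x := Var x)) \<phi>" by (rule Ex.IH) (use Ex.prems in auto)
  then show ?case by simp
next
  case (Conj a b)
  have "subst \<sigma> a = subst \<sigma>' a" by (rule Conj.IH(1)) (use Conj.prems in simp)
  moreover have "subst \<sigma> b = subst \<sigma>' b" by (rule Conj.IH(2)) (use Conj.prems in simp)
  ultimately show ?case by simp
next
  case (Disj a b)
  have "subst \<sigma> a = subst \<sigma>' a" by (rule Disj.IH(1)) (use Disj.prems in simp)
  moreover have "subst \<sigma> b = subst \<sigma>' b" by (rule Disj.IH(2)) (use Disj.prems in simp)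
  ultimately show ?case by simp
qed simp_all

lemma substble_cong: "\<forall>v\<in>fv \<phi>. \<sigma> v = \<sigma>' v \<Longrightarrow> substble \<sigma> \<phi> = substble \<sigma>' \<phi>"
proof (induction \<phi> arbitrary: \<sigma> \<sigma>')
  case (Conj a b)
  have "substble \<sigma> a = substble \<sigma>' a" by (rule Conj.IH(1)) (use Conj.prems in simp)
  moreover have "substble \<sigma> b = substble \<sigma>' b" by (rule Conj.IH(2)) (use Conj.prems in simp)
  ultimately show ?case by simp
next
  case (Disj a b)
  have "substble \<sigma> a = substble \<sigma>' a" by (rule Disj.IH(1)) (use Disj.prems in simp)
  moreover have "substble \<sigma> b = substble \<sigma>' b" by (rule Disj.IH(2)) (use Disj.prems in simp)
  ultimately show ?case by simp
next
  case (BAll x t \<phi>)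
  have "substble (\<sigma>(x := Var x)) \<phi> = substble (\<sigma>'(x := Var x)) \<phi>" by (rule BAll.IH) (use BAll.prems in auto)
  moreover have "(\<forall>v \<in> fv \<phi> - {x}. x \<notin> tvars (\<sigma> v)) = (\<forall>v \<in> fv \<phi> - {x}. x \<notin> tvars (\<sigma>' v))"
    using BAll.prems by simp
  ultimately show ?case by simp
next
  case (Ex x \<phi>)
  have "substble (\<sigma>(x := Var x)) \<phi> = substble (\<sigma>'(x := Var x)) \<phi>" by (rule Ex.IH) (use Ex.prems in auto)
  moreover have "(\<forall>v \<in> fv \<phi> - {x}. x \<notin> tvars (\<sigma> v)) = (\<forall>v \<in> fv \<phi> - {x}. x \<notin> tvars (\<sigma>' v))"
    using Ex.prems by simp
  ultimately show ?case by simp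
qed simp_all

lemma Var_upd[simp]: "Var(x := Var x) = Var" by auto

lemma subst_Var[simp]: "subst Var \<phi> = \<phi>"
  by (induction \<phi>) (simp_all add: map_idI)
lemma substble_Var[simp]: "substble Var \<phi>"
  by (induction \<phi>) simp_all

lemma bnd_subst[simp]: "bnd (subst \<sigma> \<phi>) = bnd \<phi>"
  by (induction \<phi> arbitrary: \<sigma>) simp_all

lemma fv_subst_le: "fv (subst \<sigma> \<phi>) \<subseteq> (\<Union>v\<in>fv \<phi>. tvars (\<sigma> v))"
proof (induction \<phi> arbitrary: \<sigma>)
  case (Atom p ts) then show ?case by (auto simp: tvars_tsubst)
next
  case (Conj a b) then show ?case by (simp, blast)
next
  case (Disj a b) then show ?case by (simp, blast)
next
  case (BAll x t \<phi>)
  have "fv (subst (\<sigma>(x := Var x)) \<phi>) \<subseteq> (\<Union>v\<in>fv \<phi>. tvars ((\<sigma>(x := Var x)) v))" by (rule BAll.IH)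
  then show ?case by (auto simp: tvars_tsubst split: if_splits) 
next
  case (Ex x \<phi>)
  have "fv (subst (\<sigma>(x := Var x)) \<phi>) \<subseteq> (\<Union>v\<in>fv \<phi>. tvars ((\<sigma>(x := Var x)) v))" by (rule Ex.IH)
  then show ?case by (auto split: if_splits)
qed simp_all

lemma fv_subst: "substble \<sigma> \<phi> \<Longrightarrow> fv (subst \<sigma> \<phi>) = (\<Union>v\<in>fv \<phi>. tvars (\<sigma> v))"
proof (induction \<phi> arbitrary: \<sigma>)
  case (Atom p ts) then show ?case by (auto simp: tvars_tsubst)
next
  case (Conj a b) then show ?case by (simp add: UN_Un)
next
  case (Disj a b) then show ?case by (simp add: UN_Un)
next
  case (BAll x t \<phi>)
  have IH: "fv (subst (\<sigma>(x := Var x)) \<phi>) = (\<Union>v\<in>fv \<phi>. tvars ((\<sigma>(x := Var x)) v))"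
    using BAll.prems by (intro BAll.IH) (simp only: substble.simps)
  show ?case using BAll.prems by (auto simp: IH tvars_tsubst split: if_splits)
next
  case (Ex x \<phi>)
  have IH: "fv (subst (\<sigma>(x := Var x)) \<phi>) = (\<Union>v\<in>fv \<phi>. tvars ((\<sigma>(x := Var x)) v))"
    using Ex.prems by (intro Ex.IH) (simp only: substble.simps)
  show ?case using Ex.prems by (auto simp: IH split: if_splits)
qed simp_all

lemma subst_comp: "substble \<tau> \<phi> \<Longrightarrow> subst \<sigma> (subst \<tau> \<phi>) = subst (\<lambda>v. tsubst \<sigma> (\<tau> v)) \<phi>"
proof (induction \<phi> arbitrary: \<sigma> \<tau>)
  case (Atom p ts) then show ?case by (simp add: tsubst_comp)
next
  case (BAll x t \<phi>)
  have h: "substble (\<tau>(x := Var x)) \<phi>" using BAll.prems by (simp only: substble.simps)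
  have "subst (\<sigma>(x := Var x)) (subst (\<tau>(x := Var x)) \<phi>)
      = subst (\<lambda>v. tsubst (\<sigma>(x := Var x)) ((\<tau>(x := Var x)) v)) \<phi>" by (rule BAll.IH[OF h])
  also have "\<dots> = subst ((\<lambda>v. tsubst \<sigma> (\<tau> v))(x := Var x)) \<phi>"
  proof (rule subst_cong)
    fix v assume "v \<in> fv \<phi>"
    then show "tsubst (\<sigma>(x := Var x)) ((\<tau>(x := Var x)) v) = ((\<lambda>v. tsubst \<sigma> (\<tau> v))(x := Var x)) v"
      using BAll.prems by (cases "v = x") (auto intro!: tsubst_cong)
  qed
  finally show ?case by (simp add: tsubst_comp)
next
  case (Ex x \<phi>)
  have h: "substble (\<tau>(x := Var x)) \<phi>" using Ex.prems by (simp only: substble.simps)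
  have "subst (\<sigma>(x := Var x)) (subst (\<tau>(x := Var x)) \<phi>)
      = subst (\<lambda>v. tsubst (\<sigma>(x := Var x)) ((\<tau>(x := Var x)) v)) \<phi>" by (rule Ex.IH[OF h])
  also have "\<dots> = subst ((\<lambda>v. tsubst \<sigma> (\<tau> v))(x := Var x)) \<phi>"
  proof (rule subst_cong)
    fix v assume "v \<in> fv \<phi>"
    then show "tsubst (\<sigma>(x := Var x)) ((\<tau>(x := Var x)) v) = ((\<lambda>v. tsubst \<sigma> (\<tau> v))(x := Var x)) v"
      using Ex.prems by (cases "v = x") (auto intro!: tsubst_cong)
  qed
  finally show ?case by simp
qed simp_all

lemma substble_comp_aux:
  assumes fvs: "fv \<psi> = (\<Union>v\<in>fv \<phi>. tvars ((\<tau>(x := Var x)) v))"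
    and h2: "\<forall>v \<in> fv \<phi> - {x}. x \<notin> tvars (\<tau> v)"
  shows "(\<forall>v \<in> fv \<psi> - {x}. x \<notin> tvars (\<sigma> v))
         = (\<forall>v \<in> fv \<phi> - {x}. x \<notin> tvars (tsubst \<sigma> (\<tau> v)))"
proof
  assume L: "\<forall>v \<in> fv \<psi> - {x}. x \<notin> tvars (\<sigma> v)"
  show "\<forall>v \<in> fv \<phi> - {x}. x \<notin> tvars (tsubst \<sigma> (\<tau> v))"
  proof (intro ballI notI)
    fix v assume v: "v \<in> fv \<phi> - {x}" and "x \<in> tvars (tsubst \<sigma> (\<tau> v))"
    then obtain w where w: "w \<in> tvars (\<tau> v)" "x \<in> tvars (\<sigma> w)" by (auto simp: tvars_tsubst)
    have "w \<noteq> x" using h2 v w by auto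
    have "w \<in> tvars ((\<tau>(x:=Var x)) v)" using v w by simp
    then have "w \<in> fv \<psi> - {x}" unfolding fvs using v \<open>w\<noteq>x\<close> by blast
    then show False using L w by blast
  qed
next
  assume R: "\<forall>v \<in> fv \<phi> - {x}. x \<notin> tvars (tsubst \<sigma> (\<tau> v))"
  show "\<forall>v \<in> fv \<psi> - {x}. x \<notin> tvars (\<sigma> v)"
  proof
    fix w assume "w \<in> fv \<psi> - {x}"
    then obtain u where u: "u \<in> fv \<phi>" "w \<in> tvars ((\<tau>(x:=Var x)) u)" "w \<noteq> x" unfolding fvs by auto
    then have "u \<noteq> x" by (cases "u = x") auto
    then have "w \<in> tvars (\<tau> u)" using u by simp
    then show "x \<notin> tvars (\<sigma> w)" using R u \<open>u\<noteq>x\<close> by (auto simp: tvars_tsubst)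
  qed
qed

lemma substble_comp: "substble \<tau> \<phi> \<Longrightarrow> substble \<sigma> (subst \<tau> \<phi>) = substble (\<lambda>v. tsubst \<sigma> (\<tau> v)) \<phi>"
proof (induction \<phi> arbitrary: \<sigma> \<tau>)
  case (BAll x t \<phi>)
  have hh: "substble (\<tau>(x := Var x)) \<phi> \<and> (\<forall>v \<in> fv \<phi> - {x}. x \<notin> tvars (\<tau> v))"
    using BAll.prems[unfolded substble.simps] .
  note h = conjunct1[OF hh] and h2 = conjunct2[OF hh]
  have "substble (\<sigma>(x := Var x)) (subst (\<tau>(x := Var x)) \<phi>)
      = substble (\<lambda>v. tsubst (\<sigma>(x := Var x)) ((\<tau>(x := Var x)) v)) \<phi>" by (rule BAll.IH[OF h])
  also have "\<dots> = substble ((\<lambda>v. tsubst \<sigma> (\<tau> v))(x := Var x)) \<phi>"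
  proof (rule substble_cong, rule ballI)
    fix v assume "v \<in> fv \<phi>"
    then show "tsubst (\<sigma>(x := Var x)) ((\<tau>(x := Var x)) v) = ((\<lambda>v. tsubst \<sigma> (\<tau> v))(x := Var x)) v"
      using h2 by (cases "v = x") (auto intro!: tsubst_cong)
  qed
  finally have A: "substble (\<sigma>(x := Var x)) (subst (\<tau>(x := Var x)) \<phi>) = substble ((\<lambda>v. tsubst \<sigma> (\<tau> v))(x := Var x)) \<phi>" .
  have fvs: "fv (subst (\<tau>(x := Var x)) \<phi>) = (\<Union>v\<in>fv \<phi>. tvars ((\<tau>(x := Var x)) v))"
    by (rule fv_subst[OF h])
  have B: "(\<forall>v \<in> fv (subst (\<tau>(x := Var x)) \<phi>) - {x}. x \<notin> tvars (\<sigma> v))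
         = (\<forall>v \<in> fv \<phi> - {x}. x \<notin> tvars (tsubst \<sigma> (\<tau> v)))"
    by (rule substble_comp_aux[OF fvs h2])
  show ?case using A B by simp
next
  case (Ex x \<phi>)
  have hh: "substble (\<tau>(x := Var x)) \<phi> \<and> (\<forall>v \<in> fv \<phi> - {x}. x \<notin> tvars (\<tau> v))"
    using Ex.prems[unfolded substble.simps] .
  note h = conjunct1[OF hh] and h2 = conjunct2[OF hh]
  have "substble (\<sigma>(x := Var x)) (subst (\<tau>(x := Var x)) \<phi>)
      = substble (\<lambda>v. tsubst (\<sigma>(x := Var x)) ((\<tau>(x := Var x)) v)) \<phi>" by (rule Ex.IH[OF h])
  also have "\<dots> = substble ((\<lambda>v. tsubst \<sigma> (\<tau> v))(x := Var x)) \<phi>"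
  proof (rule substble_cong, rule ballI)
    fix v assume "v \<in> fv \<phi>"
    then show "tsubst (\<sigma>(x := Var x)) ((\<tau>(x := Var x)) v) = ((\<lambda>v. tsubst \<sigma> (\<tau> v))(x := Var x)) v"
      using h2 by (cases "v = x") (auto intro!: tsubst_cong)
  qed
  finally have A: "substble (\<sigma>(x := Var x)) (subst (\<tau>(x := Var x)) \<phi>) = substble ((\<lambda>v. tsubst \<sigma> (\<tau> v))(x := Var x)) \<phi>" .
  have fvs: "fv (subst (\<tau>(x := Var x)) \<phi>) = (\<Union>v\<in>fv \<phi>. tvars ((\<tau>(x := Var x)) v))"
    by (rule fv_subst[OF h])
  have B: "(\<forall>v \<in> fv (subst (\<tau>(x := Var x)) \<phi>) - {x}. x \<notin> tvars (\<sigma> v))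
         = (\<forall>v \<in> fv \<phi> - {x}. x \<notin> tvars (tsubst \<sigma> (\<tau> v)))"
    by (rule substble_comp_aux[OF fvs h2])
  show ?case using A B by simp
qed simp_all

lemma substble_crit: "\<forall>v\<in>fv \<phi>. tvars (\<sigma> v) \<inter> bnd \<phi> \<subseteq> {v} \<Longrightarrow> substble \<sigma> \<phi>"
proof (induction \<phi> arbitrary: \<sigma>)
  case (Conj a b)
  have "substble \<sigma> a" by (rule Conj.IH(1)) (use Conj.prems in auto)
  moreover have "substble \<sigma> b" by (rule Conj.IH(2)) (use Conj.prems in auto)
  ultimately show ?case by simp
next
  case (Disj a b)
  have "substble \<sigma> a" by (rule Disj.IH(1)) (use Disj.prems in auto)
  moreover have "substble \<sigma> b" by (rule Disj.IH(2)) (use Disj.prems in auto)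
  ultimately show ?case by simp
next
  case (BAll x t \<phi>)
  have "substble (\<sigma>(x := Var x)) \<phi>"
  proof (rule BAll.IH, rule ballI)
    fix v assume v: "v \<in> fv \<phi>"
    show "tvars ((\<sigma>(x := Var x)) v) \<inter> bnd \<phi> \<subseteq> {v}"
    proof (cases "v = x")
      case True then show ?thesis by simp
    next
      case False
      then have "v \<in> fv (BAll x t \<phi>)" using v by simp
      then have "tvars (\<sigma> v) \<inter> bnd (BAll x t \<phi>) \<subseteq> {v}" using BAll.prems by blast
      then show ?thesis using False by auto
    qed
  qed
  moreover have "\<forall>v \<in> fv \<phi> - {x}. x \<notin> tvars (\<sigma> v)"
  proof
    fix v assume v: "v \<in> fv \<phi> - {x}"
    then have "v \<in> fv (BAll x t \<phi>)" by simp
    then have "tvars (\<sigma> v) \<inter> bnd (BAll x t \<phi>) \<subseteq> {v}" using BAll.prems by blast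
    then show "x \<notin> tvars (\<sigma> v)" using v by auto
  qed
  ultimately show ?case by simp
next
  case (Ex x \<phi>)
  have "substble (\<sigma>(x := Var x)) \<phi>"
  proof (rule Ex.IH, rule ballI)
    fix v assume v: "v \<in> fv \<phi>"
    show "tvars ((\<sigma>(x := Var x)) v) \<inter> bnd \<phi> \<subseteq> {v}"
    proof (cases "v = x")
      case True then show ?thesis by simp
    next
      case False
      then have "v \<in> fv (Ex x \<phi>)" using v by simp
      then have "tvars (\<sigma> v) \<inter> bnd (Ex x \<phi>) \<subseteq> {v}" using Ex.prems by blast
      then show ?thesis using False by auto
    qed
  qed
  moreover have "\<forall>v \<in> fv \<phi> - {x}. x \<notin> tvars (\<sigma> v)"
  proof
    fix v assume v: "v \<in> fv \<phi> - {x}"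
    then have "v \<in> fv (Ex x \<phi>)" by simp
    then have "tvars (\<sigma> v) \<inter> bnd (Ex x \<phi>) \<subseteq> {v}" using Ex.prems by blast
    then show "x \<notin> tvars (\<sigma> v)" using v by auto
  qed
  ultimately show ?case by simp
qed simp_all

lemma fwf_subst: "fwf FA PA \<phi> \<Longrightarrow> \<forall>v. twf FA (\<sigma> v) \<Longrightarrow> fwf FA PA (subst \<sigma> \<phi>)"
proof (induction \<phi> arbitrary: \<sigma>)
  case (Atom p ts) then show ?case by (auto simp: list_all_iff intro: twf_tsubst)
next
  case (BAll x t \<phi>)
  have "\<forall>v. twf FA ((\<sigma>(x := Var x)) v)" using BAll.prems by simp
  then show ?case using BAll.IH BAll.prems by (simp add: twf_tsubst)
next
  case (Ex x \<phi>)
  have "\<forall>v. twf FA ((\<sigma>(x := Var x)) v)" using Ex.prems by simp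
  then show ?case using Ex.IH Ex.prems by simp
qed simp_all


lemma rename_facts:
  assumes "c \<notin> fv \<psi>" "c \<notin> bnd \<psi>"
  shows "substble (Var(x := Var c)) \<psi>"
    and "subst (Var(c := Var x)) (subst (Var(x := Var c)) \<psi>) = \<psi>"
    and "substble (Var(c := Var x)) (subst (Var(x := Var c)) \<psi>)"
    and "fv (subst (Var(x := Var c)) \<psi>) \<subseteq> (fv \<psi> - {x}) \<union> {c}"
proof -
  show s1: "substble (Var(x := Var c)) \<psi>"
    by (rule substble_crit) (use assms in auto)
  have "subst (Var(c := Var x)) (subst (Var(x := Var c)) \<psi>)
     = subst (\<lambda>v. tsubst (Var(c := Var x)) ((Var(x := Var c)) v)) \<psi>" by (rule subst_comp[OF s1])
  also have "\<dots> = subst Var \<psi>" by (rule subst_cong) (use assms in auto)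
  finally show "subst (Var(c := Var x)) (subst (Var(x := Var c)) \<psi>) = \<psi>" by simp
  have "substble (Var(c := Var x)) (subst (Var(x := Var c)) \<psi>)
     = substble (\<lambda>v. tsubst (Var(c := Var x)) ((Var(x := Var c)) v)) \<psi>" by (rule substble_comp[OF s1])
  also have "\<dots> = substble Var \<psi>" by (rule substble_cong) (use assms in auto)
  finally show "substble (Var(c := Var x)) (subst (Var(x := Var c)) \<psi>)" by simp
  show "fv (subst (Var(x := Var c)) \<psi>) \<subseteq> (fv \<psi> - {x}) \<union> {c}"
    using fv_subst_le[of "Var(x := Var c)" \<psi>] by (auto split: if_splits)
qed

primrec cwf :: "('f \<Rightarrow> nat) \<Rightarrow> ('p \<Rightarrow> nat) \<Rightarrow> ('f, 'p) ctx \<Rightarrow> bool" where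
  "cwf FA PA Hole = True"
| "cwf FA PA (CConjL C \<psi>) = (cwf FA PA C \<and> fwf FA PA \<psi>)"
| "cwf FA PA (CConjR \<phi> C) = (fwf FA PA \<phi> \<and> cwf FA PA C)"
| "cwf FA PA (CDisjL C \<psi>) = (cwf FA PA C \<and> fwf FA PA \<psi>)"
| "cwf FA PA (CDisjR \<phi> C) = (fwf FA PA \<phi> \<and> cwf FA PA C)"
| "cwf FA PA (CBAll x t C) = (twf FA t \<and> cwf FA PA C)"
| "cwf FA PA (CEx x C) = cwf FA PA C"

lemma fwf_plug[simp]: "fwf FA PA (plug C A) = (cwf FA PA C \<and> fwf FA PA A)"
  by (induction C) auto

primrec ccomp :: "('f, 'p) ctx \<Rightarrow> ('f, 'p) ctx \<Rightarrow> ('f, 'p) ctx" where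
  "ccomp Hole D = D"
| "ccomp (CConjL C \<psi>) D = CConjL (ccomp C D) \<psi>"
| "ccomp (CConjR \<phi> C) D = CConjR \<phi> (ccomp C D)"
| "ccomp (CDisjL C \<psi>) D = CDisjL (ccomp C D) \<psi>"
| "ccomp (CDisjR \<phi> C) D = CDisjR \<phi> (ccomp C D)"
| "ccomp (CBAll x t C) D = CBAll x t (ccomp C D)"
| "ccomp (CEx x C) D = CEx x (ccomp C D)"

lemma plug_ccomp: "plug (ccomp C D) A = plug C (plug D A)"
  by (induction C) auto

lemma application_plug: "application c A B \<Longrightarrow> application c (plug C A) (plug C B)"
  unfolding application_def by (metis plug_ccomp)

locale L =
  fixes FA :: "'f \<Rightarrow> nat" and PA :: "'p \<Rightarrow> nat" and T :: "('f, 'p) cond set"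
begin

abbreviation W where "W \<equiv> fwf FA PA"

inductive der :: "('f, 'p) fm \<Rightarrow> ('f, 'p) fm \<Rightarrow> bool" where
  dref: "W A \<Longrightarrow> der A A"
| dstep: "der A B \<Longrightarrow> c \<in> T \<union> logax FA PA \<Longrightarrow> application c B C \<Longrightarrow> W C \<Longrightarrow> der A C"

lemma der_fwf: "der A B \<Longrightarrow> W A \<and> W B"
  by (induction rule: der.induct) auto

lemma der_trans: "der B C \<Longrightarrow> der A B \<Longrightarrow> der A C"
  by (induction rule: der.induct) (auto intro: dstep)

lemma der_ctx: "der A B \<Longrightarrow> cwf FA PA C \<Longrightarrow> der (plug C A) (plug C B)"
proof (induction rule: der.induct)
  case (dref A) then show ?case by (auto intro: der.dref)
next
  case (dstep A B c D)
  then show ?case by (auto intro: der.dstep application_plug)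
qed

lemma der_fp: "der A B \<Longrightarrow> fp_provable FA PA T A B"
proof (induction rule: der.induct)
  case (dref A)
  then show ?case unfolding fp_provable_def fp_proof_def by (intro exI[of _ "[A]"]) auto
next
  case (dstep A B c C)
  then obtain xs where xs: "fp_proof FA PA T xs A B" unfolding fp_provable_def by blast
  have "fp_proof FA PA T (xs @ [C]) A C"
    unfolding fp_proof_def
  proof (intro conjI allI impI)
    show "xs @ [C] \<noteq> []" by simp
    show "hd (xs @ [C]) = A" using xs unfolding fp_proof_def by simp
    show "last (xs @ [C]) = C" by simp
    show "list_all W (xs @ [C])" using xs dstep unfolding fp_proof_def by simp
    fix i assume i: "Suc i < length (xs @ [C])"
    show "\<exists>c\<in>T \<union> logax FA PA. application c ((xs @ [C]) ! i) ((xs @ [C]) ! Suc i)"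
    proof (cases "Suc i < length xs")
      case True then show ?thesis using xs unfolding fp_proof_def by (simp add: nth_append)
    next
      case False
      then have "Suc i = length xs" using i by simp
      moreover have "xs ! i = B" using xs \<open>Suc i = length xs\<close> unfolding fp_proof_def
        by (metis diff_Suc_1 last_conv_nth)
      ultimately show ?thesis using dstep by (auto simp: nth_append)
    qed
  qed
  then show ?case unfolding fp_provable_def by blast
qed

lemma der_ax:
  assumes "c \<in> T \<union> logax FA PA" "substble \<sigma> (fst c)" "substble \<sigma> (snd c)"
    "W (subst \<sigma> (fst c))" "W (subst \<sigma> (snd c))"
  shows "der (subst \<sigma> (fst c)) (subst \<sigma> (snd c))"
proof -
  have "application c (plug Hole (subst \<sigma> (fst c))) (plug Hole (subst \<sigma> (snd c)))"
    unfolding application_def using assms by blast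
  then show ?thesis using assms by (auto intro: dstep dref)
qed

lemma der_ax0: "c \<in> logax FA PA \<Longrightarrow> W (fst c) \<Longrightarrow> W (snd c) \<Longrightarrow> der (fst c) (snd c)"
  using der_ax[of c Var] by simp

end


context L begin

lemma W_der1: "der A B \<Longrightarrow> W A" using der_fwf by blast
lemma W_der2: "der A B \<Longrightarrow> W B" using der_fwf by blast

lemma d_top: "W A \<Longrightarrow> der A Top" using der_ax0[OF logax.P1] by simp
lemma d_bot: "W A \<Longrightarrow> der Bot A" using der_ax0[OF logax.P2] by simp
lemma d_cE1: "W A \<Longrightarrow> W B \<Longrightarrow> der (Conj A B) A" using der_ax0[OF logax.P3] by simp
lemma d_cE2: "W A \<Longrightarrow> W B \<Longrightarrow> der (Conj A B) B" using der_ax0[OF logax.P4] by simp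
lemma d_dup: "W A \<Longrightarrow> der A (Conj A A)" using der_ax0[OF logax.P5] by simp
lemma d_dI1: "W A \<Longrightarrow> W B \<Longrightarrow> der A (Disj A B)" using der_ax0[OF logax.P6] by simp
lemma d_dI2: "W A \<Longrightarrow> W B \<Longrightarrow> der B (Disj A B)" using der_ax0[OF logax.P7] by simp
lemma d_dD: "W A \<Longrightarrow> der (Disj A A) A" using der_ax0[OF logax.P8] by simp
lemma d_P9: "W A \<Longrightarrow> W B \<Longrightarrow> W C \<Longrightarrow> der (Conj (Disj A B) C) (Disj (Conj A C) (Conj B C))"
  using der_ax0[OF logax.P9] by simp

lemma ctxCL: "der A A' \<Longrightarrow> W B \<Longrightarrow> der (Conj A B) (Conj A' B)"
  using der_ctx[of A A' "CConjL Hole B"] by simp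
lemma ctxCR: "der A A' \<Longrightarrow> W B \<Longrightarrow> der (Conj B A) (Conj B A')"
  using der_ctx[of A A' "CConjR B Hole"] by simp
lemma ctxDL: "der A A' \<Longrightarrow> W B \<Longrightarrow> der (Disj A B) (Disj A' B)"
  using der_ctx[of A A' "CDisjL Hole B"] by simp
lemma ctxDR: "der A A' \<Longrightarrow> W B \<Longrightarrow> der (Disj B A) (Disj B A')"
  using der_ctx[of A A' "CDisjR B Hole"] by simp
lemma ctxEx: "der A A' \<Longrightarrow> der (Ex x A) (Ex x A')"
  using der_ctx[of A A' "CEx x Hole"] by simp
lemma ctxBAll: "der A A' \<Longrightarrow> twf FA t \<Longrightarrow> der (BAll x t A) (BAll x t A')"
  using der_ctx[of A A' "CBAll x t Hole"] by simp

lemma d_conjI: assumes "der A B" "der A C" shows "der A (Conj B C)"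
proof -
  have WA: "W A" and WB: "W B" and WC: "W C" using assms der_fwf by blast+
  have "der A (Conj A A)" by (rule d_dup[OF WA])
  moreover have "der (Conj A A) (Conj B A)" by (rule ctxCL[OF assms(1) WA])
  moreover have "der (Conj B A) (Conj B C)" by (rule ctxCR[OF assms(2) WB])
  ultimately show ?thesis by (meson der_trans)
qed

lemma d_ccomm: "W A \<Longrightarrow> W B \<Longrightarrow> der (Conj A B) (Conj B A)"
  by (intro d_conjI d_cE1 d_cE2)

lemma d_disjE: assumes "der A C" "der B C" shows "der (Disj A B) C"
proof -
  have WA: "W A" and WB: "W B" and WC: "W C" using assms der_fwf by blast+
  have "der (Disj A B) (Disj C B)" by (rule ctxDL[OF assms(1) WB])
  moreover have "der (Disj C B) (Disj C C)" by (rule ctxDR[OF assms(2) WC])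
  moreover have "der (Disj C C) C" by (rule d_dD[OF WC])
  ultimately show ?thesis by (meson der_trans)
qed

lemma d_dcomm: "W A \<Longrightarrow> W B \<Longrightarrow> der (Disj A B) (Disj B A)"
  by (intro d_disjE d_dI1 d_dI2)

lemma d_mono_conj: "der A A' \<Longrightarrow> der B B' \<Longrightarrow> der (Conj A B) (Conj A' B')"
  by (meson ctxCL ctxCR der_trans der_fwf)
lemma d_mono_disj: "der A A' \<Longrightarrow> der B B' \<Longrightarrow> der (Disj A B) (Disj A' B')"
  by (meson ctxDL ctxDR der_trans der_fwf)

lemma d_cut:
  assumes "der X (Disj P Q)" "der (Conj X P) R" "der Q R"
  shows "der X R"
proof -
  have WX: "W X" and WP: "W P" and WQ: "W Q" and WR: "W R"
    using der_fwf[OF assms(1)] der_fwf[OF assms(2)] der_fwf[OF assms(3)] by auto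
  have "der X (Conj X X)" by (rule d_dup[OF WX])
  moreover have "der (Conj X X) (Conj X (Disj P Q))" by (rule ctxCR[OF assms(1) WX])
  moreover have "der (Conj X (Disj P Q)) (Conj (Disj P Q) X)" using WX WP WQ by (intro d_ccomm) auto
  moreover have "der (Conj (Disj P Q) X) (Disj (Conj P X) (Conj Q X))" by (rule d_P9[OF WP WQ WX])
  moreover have "der (Disj (Conj P X) (Conj Q X)) R"
  proof (rule d_disjE)
    show "der (Conj P X) R" using d_ccomm[OF WP WX] assms(2) by (rule der_trans[rotated])
    show "der (Conj Q X) R" using d_cE1[OF WQ WX] assms(3) by (rule der_trans[rotated])
  qed
  ultimately show ?thesis by (meson der_trans)
qed

end


lemma fresh_var: "finite (S::nat set) \<Longrightarrow> \<exists>x. x \<notin> S"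
  using infinite_UNIV_nat by (meson ex_new_if_finite)

context L begin

lemma d_P11: "W \<psi> \<Longrightarrow> y \<notin> fv \<psi> \<Longrightarrow> der (Ex y \<psi>) \<psi>"
  using der_ax0[OF logax.P11] by simp
lemma d_P12: "W \<chi> \<Longrightarrow> W \<phi> \<Longrightarrow> y \<notin> fv \<chi> \<Longrightarrow> der (Conj \<chi> (Ex y \<phi>)) (Ex y (Conj \<chi> \<phi>))"
  using der_ax0[OF logax.P12] by simp

lemma d_ex_rename:
  assumes W: "W \<psi>" and c: "c \<notin> fv \<psi>" "c \<notin> bnd \<psi>" "c \<noteq> x"
  shows "der (Ex x \<psi>) (Ex c (subst (Var(x := Var c)) \<psi>))"
proof -
  let ?\<psi>c = "subst (Var(x := Var c)) \<psi>"
  let ?\<sigma> = "Var(c := Var x)"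
  note R = rename_facts[OF c(1,2), of x]
  have Wc: "W ?\<psi>c" using W by (intro fwf_subst) auto
  have ax: "(?\<psi>c, Ex c ?\<psi>c) \<in> T \<union> logax FA PA" using Wc by (auto intro: logax.P10)
  have s1: "substble ?\<sigma> (Ex c ?\<psi>c)"
  proof -
    have "?\<sigma>(c := Var c) = Var" by auto
    moreover have "\<forall>v \<in> fv ?\<psi>c - {c}. c \<notin> tvars (?\<sigma> v)" by auto
    ultimately show ?thesis by simp
  qed
  have e1: "subst ?\<sigma> (Ex c ?\<psi>c) = Ex c ?\<psi>c"
  proof -
    have "?\<sigma>(c := Var c) = Var" by auto
    then show ?thesis by simp
  qed
  have "der (subst ?\<sigma> (fst (?\<psi>c, Ex c ?\<psi>c))) (subst ?\<sigma> (snd (?\<psi>c, Ex c ?\<psi>c)))"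
    by (rule der_ax[OF ax]) (use R(2,3) s1 e1 W Wc in simp_all)
  then have "der \<psi> (Ex c ?\<psi>c)" using R(2) e1 by simp
  then have "der (Ex x \<psi>) (Ex x (Ex c ?\<psi>c))" by (rule ctxEx)
  moreover have "der (Ex x (Ex c ?\<psi>c)) (Ex c ?\<psi>c)"
    by (rule d_P11) (use Wc R(4) c in auto)
  ultimately show ?thesis by (rule der_trans[rotated])
qed

lemma d_eqsub:
  assumes W: "W \<phi>" and ab: "twf FA a" "twf FA b" and \<tau>: "\<forall>v. twf FA (\<tau> v)"
    and sa: "substble (\<tau>(z := a)) \<phi>" and sb: "substble (\<tau>(z := b)) \<phi>"
  shows "der (Conj (Atom PEq [a, b]) (subst (\<tau>(z := a)) \<phi>)) (subst (\<tau>(z := b)) \<phi>)"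
proof -
  obtain x' where x': "x' \<notin> fv \<phi> \<union> bnd \<phi> \<union> {z}" using fresh_var[of "fv \<phi> \<union> bnd \<phi> \<union> {z}"] by auto
  obtain y' where y': "y' \<notin> fv \<phi> \<union> bnd \<phi> \<union> {z, x'}" using fresh_var[of "fv \<phi> \<union> bnd \<phi> \<union> {z, x'}"] by auto
  have sx: "substble (Var(z := Var x')) \<phi>" by (rule substble_crit) (use x' in auto)
  have sy: "substble (Var(z := Var y')) \<phi>" by (rule substble_crit) (use y' in auto)
  let ?c = "(Conj (vEq x' y') (subst (Var(z := Var x')) \<phi>), subst (Var(z := Var y')) \<phi>)"
  have ax: "?c \<in> T \<union> logax FA PA" using W sx sy by (auto intro: logax.P23)
  let ?\<sigma> = "\<tau>(x' := a, y' := b)"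
  have eqa: "(\<lambda>v. tsubst ?\<sigma> ((Var(z := Var x')) v)) = (\<lambda>v. if v = z then a else ?\<sigma> v)" using x' y' by auto
  have eqb: "(\<lambda>v. tsubst ?\<sigma> ((Var(z := Var y')) v)) = (\<lambda>v. if v = z then b else ?\<sigma> v)" using x' y' by auto
  have ca: "\<forall>v\<in>fv \<phi>. (\<lambda>v. if v = z then a else ?\<sigma> v) v = (\<tau>(z := a)) v" using x' y' by auto
  have cb: "\<forall>v\<in>fv \<phi>. (\<lambda>v. if v = z then b else ?\<sigma> v) v = (\<tau>(z := b)) v" using x' y' by auto
  have A1: "subst ?\<sigma> (subst (Var(z := Var x')) \<phi>) = subst (\<tau>(z := a)) \<phi>"
    unfolding subst_comp[OF sx] eqa using ca by (intro subst_cong) blast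
  have A2: "subst ?\<sigma> (subst (Var(z := Var y')) \<phi>) = subst (\<tau>(z := b)) \<phi>"
    unfolding subst_comp[OF sy] eqb using cb by (intro subst_cong) blast
  have B1: "substble ?\<sigma> (subst (Var(z := Var x')) \<phi>)"
    unfolding substble_comp[OF sx] eqa using substble_cong[OF ca] sa by (simp add: fun_upd_def)
  have B2: "substble ?\<sigma> (subst (Var(z := Var y')) \<phi>)"
    unfolding substble_comp[OF sy] eqb using substble_cong[OF cb] sb by (simp add: fun_upd_def)
  have tw: "\<forall>v. twf FA (?\<sigma> v)" using \<tau> ab by auto
  have xy: "x' \<noteq> y'" using y' by auto
  have "der (subst ?\<sigma> (fst ?c)) (subst ?\<sigma> (snd ?c))"
  proof (rule der_ax[OF ax])
    show "substble ?\<sigma> (fst ?c)" using B1 by simp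
    show "substble ?\<sigma> (snd ?c)" using B2 by simp
    show "W (subst ?\<sigma> (fst ?c))" using W tw by (intro fwf_subst) (auto intro: fwf_subst)
    show "W (subst ?\<sigma> (snd ?c))" using W tw by (intro fwf_subst) (auto intro: fwf_subst)
  qed
  then show ?thesis using A1 A2 xy by simp
qed

lemma d_refl: "twf FA a \<Longrightarrow> der Top (Atom PEq [a, a])"
  using der_ax[OF _ , of "(Top, vEq 0 0)" "Var(0 := a)"] by (auto intro: logax.P20)
lemma d_sym: "twf FA a \<Longrightarrow> twf FA b \<Longrightarrow> der (Atom PEq [a, b]) (Atom PEq [b, a])"
  using der_ax[OF _ , of "(vEq 0 1, vEq 1 0)" "Var(0 := a, 1 := b)"] by (auto intro: logax.P21)
lemma d_etrans: "twf FA a \<Longrightarrow> twf FA b \<Longrightarrow> twf FA c \<Longrightarrow>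
   der (Conj (Atom PEq [a, b]) (Atom PEq [b, c])) (Atom PEq [a, c])"
  using der_ax[OF _ , of "(Conj (vEq 0 1) (vEq 1 2), vEq 0 2)" "Var(0 := a, 1 := b, 2 := c)"]
  by (auto intro: logax.P22)

end


context L begin

lemma d_exeq:
  assumes W: "W B" and t: "twf FA t" and w: "w \<notin> fv B" "w \<notin> tvars t"
  shows "der B (Ex w (Conj B (Atom PEq [Var w, t])))"
proof -
  let ?\<phi> = "Conj B (Atom PEq [Var w, t])"
  let ?\<sigma> = "Var(w := t)"
  have ax: "(?\<phi>, Ex w ?\<phi>) \<in> T \<union> logax FA PA" using W t by (auto intro: logax.P10)
  have eB: "subst ?\<sigma> B = B"
    using subst_cong[of B ?\<sigma> Var] w by (metis fun_upd_other subst_Var)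
  have sB: "substble ?\<sigma> B"
    using substble_cong[of B ?\<sigma> Var] w by (metis fun_upd_other substble_Var)
  have et: "tsubst ?\<sigma> t = t"
    using tsubst_cong[of t ?\<sigma> Var] w by (metis fun_upd_other tsubst_Var)
  have "der (subst ?\<sigma> (fst (?\<phi>, Ex w ?\<phi>))) (subst ?\<sigma> (snd (?\<phi>, Ex w ?\<phi>)))"
  proof (rule der_ax[OF ax])
    show "substble ?\<sigma> (fst (?\<phi>, Ex w ?\<phi>))" using sB by simp
    show "substble ?\<sigma> (snd (?\<phi>, Ex w ?\<phi>))" by simp
    show "W (subst ?\<sigma> (fst (?\<phi>, Ex w ?\<phi>)))" using W t eB et by simp
    show "W (subst ?\<sigma> (snd (?\<phi>, Ex w ?\<phi>)))" using W t by simp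
  qed
  then have "der (Conj B (Atom PEq [t, t])) (Ex w ?\<phi>)" using eB et by simp
  moreover have "der B (Conj B (Atom PEq [t, t]))"
    using d_conjI[OF dref[OF W] der_trans[OF d_refl[OF t] d_top[OF W]]] .
  ultimately show ?thesis by (rule der_trans)
qed

lemma d_ball_term:
  assumes W: "W \<psi>" and ab: "twf FA a" "twf FA b"
  shows "der (Conj (Atom PEq [a, b]) (BAll y a \<psi>)) (BAll y b \<psi>)"
proof -
  obtain z where z: "z \<notin> fv \<psi> \<union> {y}" using fresh_var[of "fv \<psi> \<union> {y}"] by auto
  let ?\<phi> = "BAll y (Var z) \<psi>"
  have e: "\<And>s. subst (Var(z := s)) ?\<phi> = BAll y s \<psi>"
  proof -
    fix s
    have "subst ((Var(z := s))(y := Var y)) \<psi> = subst Var \<psi>" by (rule subst_cong) (use z in auto)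
    then show "subst (Var(z := s)) ?\<phi> = BAll y s \<psi>" by simp
  qed
  have s: "\<And>s. substble (Var(z := s)) ?\<phi>"
  proof -
    fix s
    have "substble ((Var(z := s))(y := Var y)) \<psi> = substble Var \<psi>" by (rule substble_cong) (use z in auto)
    moreover have "\<forall>v \<in> fv \<psi> - {y}. y \<notin> tvars ((Var(z := s)) v)" using z by auto
    ultimately show "substble (Var(z := s)) ?\<phi>" by simp
  qed
  have "der (Conj (Atom PEq [a, b]) (subst (Var(z := a)) ?\<phi>)) (subst (Var(z := b)) ?\<phi>)"
    by (rule d_eqsub) (use W ab s in auto)
  then show ?thesis using e by simp
qed

lemma d_ball_rename_var:
  assumes W: "W \<psi>" and c: "c \<notin> fv \<psi>" "c \<notin> bnd \<psi>" "c \<noteq> x" and w: "w \<noteq> c" "w \<noteq> x"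
  shows "der (BAll c (Var w) (subst (Var(x := Var c)) \<psi>)) (BAll x (Var w) \<psi>)"
proof -
  let ?\<psi>c = "subst (Var(x := Var c)) \<psi>"
  let ?B = "BAll c (Var w) ?\<psi>c"
  note R = rename_facts[OF c(1,2), of x]
  have Wc: "W ?\<psi>c" using W by (intro fwf_subst) auto
  have xB: "x \<notin> fv ?B" using R(4) w c by auto
  have d1: "der ?B (BAll x (Var w) (Conj ?B (vIn x w)))"
    using der_ax0[OF logax.P14[of FA PA ?B x w]] Wc xB by simp
  let ?c13 = "(Conj (vIn c w) (BAll c (Var w) ?\<psi>c), ?\<psi>c)"
  let ?\<sigma> = "Var(c := Var x)"
  have ax: "?c13 \<in> T \<union> logax FA PA" using Wc by (auto intro: logax.P13)
  have up: "?\<sigma>(c := Var c) = Var" by auto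
  have "der (subst ?\<sigma> (fst ?c13)) (subst ?\<sigma> (snd ?c13))"
  proof (rule der_ax[OF ax])
    show "substble ?\<sigma> (fst ?c13)" using up by simp
    show "substble ?\<sigma> (snd ?c13)" using R(3) by simp
    show "W (subst ?\<sigma> (fst ?c13))" using Wc w up by simp
    show "W (subst ?\<sigma> (snd ?c13))" using W R(2) by simp
  qed
  then have d2: "der (Conj (vIn x w) ?B) \<psi>" using up w R(2) by simp
  have "der (Conj ?B (vIn x w)) \<psi>"
    using d_ccomm[of ?B "vIn x w"] d2 Wc
  proof -
    have "der (Conj ?B (vIn x w)) (Conj (vIn x w) ?B)" using Wc by (intro d_ccomm) auto
    then show ?thesis using d2 by (rule der_trans[rotated])
  qed
  then have "der (BAll x (Var w) (Conj ?B (vIn x w))) (BAll x (Var w) \<psi>)"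
    by (rule ctxBAll) simp
  with d1 show ?thesis by (rule der_trans[rotated])
qed

lemma d_ball_rename:
  assumes W: "W \<psi>" and t: "twf FA t" and c: "c \<notin> fv \<psi>" "c \<notin> bnd \<psi>" "c \<notin> tvars t" "c \<noteq> x"
  shows "der (BAll c t (subst (Var(x := Var c)) \<psi>)) (BAll x t \<psi>)"
proof -
  let ?\<psi>c = "subst (Var(x := Var c)) \<psi>"
  let ?B = "BAll c t ?\<psi>c"
  note R = rename_facts[OF c(1,2), of x]
  have Wc: "W ?\<psi>c" using W by (intro fwf_subst) auto
  have WB: "W ?B" using Wc t by simp
  obtain w where w: "w \<notin> {x, c} \<union> tvars t \<union> fv \<psi> \<union> bnd \<psi>"
    using fresh_var[of "{x, c} \<union> tvars t \<union> fv \<psi> \<union> bnd \<psi>"] by auto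
  have wB: "w \<notin> fv ?B" using R(4) w by auto
  let ?E = "Atom PEq [Var w, t]"
  have WE: "W ?E" using t by simp
  have s1: "der ?B (Ex w (Conj ?B ?E))" by (rule d_exeq) (use WB t w wB in auto)
  have a: "der (Conj ?B ?E) (Conj (Atom PEq [t, Var w]) ?B)"
    using d_ccomm[OF WB WE] ctxCL[OF d_sym[OF _ t, of "Var w", simplified] WB] by (rule der_trans[rotated])
  have b: "der (Conj (Atom PEq [t, Var w]) ?B) (BAll c (Var w) ?\<psi>c)"
    by (rule d_ball_term) (use Wc t in auto)
  have c': "der (BAll c (Var w) ?\<psi>c) (BAll x (Var w) \<psi>)"
    by (rule d_ball_rename_var) (use W c w in auto)
  have "der (Conj ?B ?E) (Conj ?E (BAll x (Var w) \<psi>))"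
  proof (rule d_conjI)
    show "der (Conj ?B ?E) ?E" by (rule d_cE2[OF WB WE])
    show "der (Conj ?B ?E) (BAll x (Var w) \<psi>)" using a b c' by (meson der_trans)
  qed
  moreover have "der (Conj ?E (BAll x (Var w) \<psi>)) (BAll x t \<psi>)"
    by (rule d_ball_term) (use W t in auto)
  ultimately have "der (Conj ?B ?E) (BAll x t \<psi>)" by (rule der_trans[rotated])
  then have "der (Ex w (Conj ?B ?E)) (Ex w (BAll x t \<psi>))" by (rule ctxEx)
  moreover have "der (Ex w (BAll x t \<psi>)) (BAll x t \<psi>)"
    by (rule d_P11) (use W t w in auto)
  ultimately show ?thesis using s1 by (meson der_trans)
qed

end


primrec conjs :: "('f, 'p) fm list \<Rightarrow> ('f, 'p) fm" where
  "conjs [] = Top" | "conjs (a # as) = Conj a (conjs as)"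
primrec disjs :: "('f, 'p) fm list \<Rightarrow> ('f, 'p) fm" where
  "disjs [] = Bot" | "disjs (a # as) = Disj a (disjs as)"

lemma fv_conjs: "fv (conjs fs) = (\<Union>a\<in>set fs. fv a)" by (induction fs) auto
lemma fv_disjs: "fv (disjs fs) = (\<Union>a\<in>set fs. fv a)" by (induction fs) auto

context L begin

lemma W_conjs: "\<forall>a\<in>set fs. W a \<Longrightarrow> W (conjs fs)" by (induction fs) auto
lemma W_disjs: "\<forall>a\<in>set fs. W a \<Longrightarrow> W (disjs fs)" by (induction fs) auto

lemma conjs_intro: "W Y \<Longrightarrow> \<forall>a\<in>set fs. der Y a \<Longrightarrow> der Y (conjs fs)"
  by (induction fs) (auto intro: d_top d_conjI)

lemma disjs_elim: "W Z \<Longrightarrow> \<forall>a\<in>set gs. der a Z \<Longrightarrow> der (disjs gs) Z"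
  by (induction gs) (auto intro: d_bot d_disjE)

lemma conjs_mem: "\<forall>a\<in>set fs. W a \<Longrightarrow> a \<in> set fs \<Longrightarrow> der (conjs fs) a"
proof (induction fs)
  case (Cons b fs)
  have Wb: "W b" and Wr: "W (conjs fs)" using Cons.prems W_conjs by auto
  show ?case
  proof (cases "a = b")
    case True then show ?thesis using d_cE1[OF Wb Wr] by simp
  next
    case False
    then have "der (conjs fs) a" using Cons by auto
    then show ?thesis using d_cE2[OF Wb Wr] by (auto intro: der_trans)
  qed
qed simp

lemma disjs_mem: "\<forall>a\<in>set gs. W a \<Longrightarrow> a \<in> set gs \<Longrightarrow> der a (disjs gs)"
proof (induction gs)
  case (Cons b gs)
  have Wb: "W b" and Wr: "W (disjs gs)" using Cons.prems W_disjs by auto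
  show ?case
  proof (cases "a = b")
    case True then show ?thesis using d_dI1[OF Wb Wr] by simp
  next
    case False
    then have "der a (disjs gs)" using Cons by auto
    then show ?thesis using d_dI2[OF Wb Wr] by (auto intro: der_trans)
  qed
qed simp

definition incons :: "('f, 'p) fm set \<Rightarrow> ('f, 'p) fm set \<Rightarrow> bool" where
  "incons F G \<longleftrightarrow> (\<exists>fs gs. set fs \<subseteq> F \<and> set gs \<subseteq> G \<and> der (conjs fs) (disjs gs))"

lemma cut_step:
  assumes WF: "\<forall>a\<in>F \<union> G. W a" and W\<phi>: "W \<phi>" and cons: "\<not> incons F G"
    and inc: "incons (insert \<phi> F) G"
  shows "\<not> incons F (insert \<phi> G)"
proof
  assume "incons F (insert \<phi> G)"
  then obtain fs2 gs2 where f2: "set fs2 \<subseteq> F" "set gs2 \<subseteq> insert \<phi> G" "der (conjs fs2) (disjs gs2)"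
    unfolding incons_def by blast
  obtain fs1 gs1 where f1: "set fs1 \<subseteq> insert \<phi> F" "set gs1 \<subseteq> G" "der (conjs fs1) (disjs gs1)"
    using inc unfolding incons_def by blast
  define fs where "fs = removeAll \<phi> fs1 @ fs2"
  define gs where "gs = gs1 @ removeAll \<phi> gs2"
  define Q where "Q = disjs (removeAll \<phi> gs2)"
  have sfs: "set fs \<subseteq> F" and sgs: "set gs \<subseteq> G" using f1 f2 unfolding fs_def gs_def by auto
  have Wfs: "\<forall>a\<in>set fs. W a" and Wgs: "\<forall>a\<in>set gs. W a" using sfs sgs WF by auto
  have WX: "W (conjs fs)" using W_conjs[OF Wfs] .
  have WD: "W (disjs gs)" using W_disjs[OF Wgs] .
  have WQ: "W Q" unfolding Q_def using f2 WF by (intro W_disjs) auto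
  have "der (conjs fs) (conjs fs2)"
    by (rule conjs_intro[OF WX]) (use Wfs conjs_mem fs_def in auto)
  moreover have "der (disjs gs2) (Disj \<phi> Q)"
  proof (rule disjs_elim)
    show "W (Disj \<phi> Q)" using W\<phi> WQ by simp
    show "\<forall>a\<in>set gs2. der a (Disj \<phi> Q)"
    proof
      fix a assume a: "a \<in> set gs2"
      show "der a (Disj \<phi> Q)"
      proof (cases "a = \<phi>")
        case True then show ?thesis using d_dI1[OF W\<phi> WQ] by simp
      next
        case False
        then have "der a Q" unfolding Q_def using a f2 WF by (intro disjs_mem) auto
        then show ?thesis using d_dI2[OF W\<phi> WQ] by (auto intro: der_trans)
      qed
    qed
  qed
  ultimately have d1: "der (conjs fs) (Disj \<phi> Q)" using f2(3) by (meson der_trans)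
  have "der (Conj (conjs fs) \<phi>) (conjs fs1)"
  proof (rule conjs_intro)
    show "W (Conj (conjs fs) \<phi>)" using WX W\<phi> by simp
    show "\<forall>a\<in>set fs1. der (Conj (conjs fs) \<phi>) a"
    proof
      fix a assume a: "a \<in> set fs1"
      show "der (Conj (conjs fs) \<phi>) a"
      proof (cases "a = \<phi>")
        case True then show ?thesis using d_cE2[OF WX W\<phi>] by simp
      next
        case False
        then have "der (conjs fs) a" using a Wfs unfolding fs_def by (intro conjs_mem) auto
        then show ?thesis using d_cE1[OF WX W\<phi>] by (auto intro: der_trans)
      qed
    qed
  qed
  moreover have "der (disjs gs1) (disjs gs)"
    by (rule disjs_elim[OF WD]) (use Wgs disjs_mem gs_def in auto)
  ultimately have d2: "der (Conj (conjs fs) \<phi>) (disjs gs)" using f1(3) by (meson der_trans)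
  have d3: "der Q (disjs gs)" unfolding Q_def
    by (rule disjs_elim[OF WD]) (use Wgs disjs_mem gs_def in auto)
  have "der (conjs fs) (disjs gs)" by (rule d_cut[OF d1 d2 d3])
  then show False using cons sfs sgs unfolding incons_def by blast
qed

end


definition freshin :: "nat \<Rightarrow> ('f, 'p) fm set \<Rightarrow> bool" where
  "freshin c S \<longleftrightarrow> (\<forall>\<phi>\<in>S. c \<notin> fv \<phi> \<and> c \<notin> bnd \<phi>)"

context L begin

lemma d_P14t:
  assumes W: "W Y" and t: "twf FA t" and c: "c \<notin> fv Y" "c \<notin> tvars t"
  shows "der Y (BAll c t (Conj Y (Atom PIn [Var c, t])))"
proof -
  obtain z where z: "z \<notin> fv Y \<union> {c}" using fresh_var[of "fv Y \<union> {c}"] by auto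
  let ?c = "(Y, BAll c (Var z) (Conj Y (vIn c z)))"
  let ?\<sigma> = "Var(z := t)"
  have ax: "?c \<in> T \<union> logax FA PA" using W c by (auto intro: logax.P14)
  have eY: "subst ?\<sigma> Y = Y" using subst_cong[of Y ?\<sigma> Var] z by (metis UnCI fun_upd_other subst_Var)
  have sY: "substble ?\<sigma> Y" using substble_cong[of Y ?\<sigma> Var] z by (metis UnCI fun_upd_other substble_Var)
  have up: "?\<sigma>(c := Var c) = ?\<sigma>" using z by auto
  have "der (subst ?\<sigma> (fst ?c)) (subst ?\<sigma> (snd ?c))"
  proof (rule der_ax[OF ax])
    show "substble ?\<sigma> (fst ?c)" using sY by simp
    have "\<forall>v\<in>fv (Conj Y (vIn c z)) - {c}. c \<notin> tvars (?\<sigma> v)" using c z by auto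
    then show "substble ?\<sigma> (snd ?c)" using sY up by simp
    show "W (subst ?\<sigma> (fst ?c))" using W eY by simp
    show "W (subst ?\<sigma> (snd ?c))" using W t eY up by simp
  qed
  then show ?thesis using eY up z by simp
qed

lemma d_P15t:
  assumes WD: "W D" and W: "W \<phi>" and t: "twf FA t" and c: "c \<notin> fv D" "c \<notin> tvars t"
  shows "der (BAll c t (Disj D \<phi>)) (Disj D (BAll c t \<phi>))"
proof -
  obtain z where z: "z \<notin> fv D \<union> fv \<phi> \<union> {c}" using fresh_var[of "fv D \<union> fv \<phi> \<union> {c}"] by auto
  let ?c = "(BAll c (Var z) (Disj D \<phi>), Disj D (BAll c (Var z) \<phi>))"
  let ?\<sigma> = "Var(z := t)"
  have ax: "?c \<in> T \<union> logax FA PA" using W WD c by (auto intro: logax.P15)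
  have up: "?\<sigma>(c := Var c) = ?\<sigma>" using z by auto
  have eD: "subst ?\<sigma> D = D" using subst_cong[of D ?\<sigma> Var] z by (metis UnCI fun_upd_other subst_Var)
  have sD: "substble ?\<sigma> D" using substble_cong[of D ?\<sigma> Var] z by (metis UnCI fun_upd_other substble_Var)
  have ep: "subst ?\<sigma> \<phi> = \<phi>" using subst_cong[of \<phi> ?\<sigma> Var] z by (metis UnCI fun_upd_other subst_Var)
  have sp: "substble ?\<sigma> \<phi>" using substble_cong[of \<phi> ?\<sigma> Var] z by (metis UnCI fun_upd_other substble_Var)
  have q1: "\<forall>v\<in>fv (Disj D \<phi>) - {c}. c \<notin> tvars (?\<sigma> v)" using z by auto
  have q2: "\<forall>v\<in>fv \<phi> - {c}. c \<notin> tvars (?\<sigma> v)" using z by auto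
  have "der (subst ?\<sigma> (fst ?c)) (subst ?\<sigma> (snd ?c))"
  proof (rule der_ax[OF ax])
    show "substble ?\<sigma> (fst ?c)" using sD sp up q1 by simp
    show "substble ?\<sigma> (snd ?c)" using sD sp up q2 by simp
    show "W (subst ?\<sigma> (fst ?c))" using W WD eD ep up t by simp
    show "W (subst ?\<sigma> (snd ?c))" using W WD eD ep up t by simp
  qed
  then show ?thesis using eD ep up z by simp
qed

lemma ex_step:
  assumes WF: "\<forall>a\<in>F \<union> G. W a" and cons: "\<not> incons F G" and ex: "Ex x \<psi> \<in> F"
    and fr: "freshin c (F \<union> G)"
  shows "\<not> incons (insert (subst (Var(x := Var c)) \<psi>) F) G"
proof
  let ?\<psi>c = "subst (Var(x := Var c)) \<psi>"
  assume "incons (insert ?\<psi>c F) G"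
  then obtain fs gs where f: "set fs \<subseteq> insert ?\<psi>c F" "set gs \<subseteq> G" "der (conjs fs) (disjs gs)"
    unfolding incons_def by blast
  define fs' where "fs' = removeAll ?\<psi>c fs"
  let ?Y = "conjs fs'" and ?D = "disjs gs"
  have "W (Ex x \<psi>)" using WF ex by blast
  then have W\<psi>: "W \<psi>" by simp
  have "c \<notin> fv (Ex x \<psi>) \<and> c \<notin> bnd (Ex x \<psi>)" using fr ex unfolding freshin_def by blast
  then have cx: "c \<notin> fv \<psi>" "c \<notin> bnd \<psi>" "c \<noteq> x" by auto
  have W\<psi>c: "W ?\<psi>c" using W\<psi> by (intro fwf_subst) auto
  have Wfs': "\<forall>a\<in>set fs'. W a" using f WF unfolding fs'_def by auto
  have WY: "W ?Y" using W_conjs[OF Wfs'] .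
  have WD: "W ?D" using f WF by (intro W_disjs) auto
  have cY: "c \<notin> fv ?Y" using fr f unfolding fv_conjs fs'_def freshin_def by auto
  have cD: "c \<notin> fv ?D" using fr f unfolding fv_disjs freshin_def by auto
  have "der (Conj ?\<psi>c ?Y) (conjs fs)"
  proof (rule conjs_intro)
    show "W (Conj ?\<psi>c ?Y)" using W\<psi>c WY by simp
    show "\<forall>a\<in>set fs. der (Conj ?\<psi>c ?Y) a"
    proof
      fix a assume a: "a \<in> set fs"
      show "der (Conj ?\<psi>c ?Y) a"
      proof (cases "a = ?\<psi>c")
        case True then show ?thesis using d_cE1[OF W\<psi>c WY] by simp
      next
        case False
        then have "der ?Y a" using a Wfs' unfolding fs'_def by (intro conjs_mem) auto
        then show ?thesis using d_cE2[OF W\<psi>c WY] by (auto intro: der_trans)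
      qed
    qed
  qed
  then have k: "der (Conj ?\<psi>c ?Y) ?D" using f(3) by (rule der_trans[rotated])
  have "der (Conj (Ex x \<psi>) ?Y) (Conj (Ex c ?\<psi>c) ?Y)" using d_ex_rename[OF W\<psi> cx] WY by (rule ctxCL)
  moreover have "der (Conj (Ex c ?\<psi>c) ?Y) (Conj ?Y (Ex c ?\<psi>c))" using W\<psi>c WY by (intro d_ccomm) auto
  moreover have "der (Conj ?Y (Ex c ?\<psi>c)) (Ex c (Conj ?Y ?\<psi>c))" by (rule d_P12[OF WY W\<psi>c cY])
  moreover have "der (Ex c (Conj ?Y ?\<psi>c)) (Ex c ?D)"
    by (rule ctxEx) (rule der_trans[OF k d_ccomm[OF WY W\<psi>c]])
  moreover have "der (Ex c ?D) ?D" by (rule d_P11[OF WD cD])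
  ultimately have "der (conjs (Ex x \<psi> # fs')) ?D" by (simp, meson der_trans)
  moreover have "set (Ex x \<psi> # fs') \<subseteq> F" using f ex unfolding fs'_def by auto
  ultimately show False using cons f(2) unfolding incons_def by blast
qed

lemma ball_step:
  assumes WF: "\<forall>a\<in>F \<union> G. W a" and cons: "\<not> incons F G" and ba: "BAll x t \<psi> \<in> G"
    and fr: "freshin c (F \<union> G)"
  shows "\<not> incons (insert (Atom PIn [Var c, t]) F) (insert (subst (Var(x := Var c)) \<psi>) G)"
proof
  let ?\<psi>c = "subst (Var(x := Var c)) \<psi>" and ?A = "Atom PIn [Var c, t]"
  assume "incons (insert ?A F) (insert ?\<psi>c G)"
  then obtain fs gs where f: "set fs \<subseteq> insert ?A F" "set gs \<subseteq> insert ?\<psi>c G" "der (conjs fs) (disjs gs)"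
    unfolding incons_def by blast
  define fs' where "fs' = removeAll ?A fs"
  define gs' where "gs' = removeAll ?\<psi>c gs"
  let ?Y = "conjs fs'" and ?D = "disjs gs'"
  have "W (BAll x t \<psi>)" using WF ba by blast
  then have W\<psi>: "W \<psi>" and t: "twf FA t" by simp_all
  have "c \<notin> fv (BAll x t \<psi>) \<and> c \<notin> bnd (BAll x t \<psi>)" using fr ba unfolding freshin_def by blast
  then have cx: "c \<notin> fv \<psi>" "c \<notin> bnd \<psi>" "c \<notin> tvars t" "c \<noteq> x" by auto
  have W\<psi>c: "W ?\<psi>c" using W\<psi> by (intro fwf_subst) auto
  have WA: "W ?A" using t by simp
  have Wfs': "\<forall>a\<in>set fs'. W a" using f WF unfolding fs'_def by auto
  have Wgs': "\<forall>a\<in>set gs'. W a" using f WF unfolding gs'_def by auto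
  have WY: "W ?Y" using W_conjs[OF Wfs'] .
  have WD: "W ?D" using W_disjs[OF Wgs'] .
  have cY: "c \<notin> fv ?Y" using fr f unfolding fv_conjs fs'_def freshin_def by auto
  have cD: "c \<notin> fv ?D" using fr f unfolding fv_disjs gs'_def freshin_def by auto
  have "der (Conj ?A ?Y) (conjs fs)"
  proof (rule conjs_intro)
    show "W (Conj ?A ?Y)" using WA WY by simp
    show "\<forall>a\<in>set fs. der (Conj ?A ?Y) a"
    proof
      fix a assume a: "a \<in> set fs"
      show "der (Conj ?A ?Y) a"
      proof (cases "a = ?A")
        case True then show ?thesis using d_cE1[OF WA WY] by simp
      next
        case False
        then have "der ?Y a" using a Wfs' unfolding fs'_def by (intro conjs_mem) auto
        then show ?thesis using d_cE2[OF WA WY] by (auto intro: der_trans)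
      qed
    qed
  qed
  moreover have "der (disjs gs) (Disj ?\<psi>c ?D)"
  proof (rule disjs_elim)
    show "W (Disj ?\<psi>c ?D)" using W\<psi>c WD by simp
    show "\<forall>a\<in>set gs. der a (Disj ?\<psi>c ?D)"
    proof
      fix a assume a: "a \<in> set gs"
      show "der a (Disj ?\<psi>c ?D)"
      proof (cases "a = ?\<psi>c")
        case True then show ?thesis using d_dI1[OF W\<psi>c WD] by simp
      next
        case False
        then have "der a ?D" using a Wgs' unfolding gs'_def by (intro disjs_mem) auto
        then show ?thesis using d_dI2[OF W\<psi>c WD] by (auto intro: der_trans)
      qed
    qed
  qed
  ultimately have k: "der (Conj ?A ?Y) (Disj ?\<psi>c ?D)" using f(3) by (meson der_trans)
  have "der ?Y (BAll c t (Conj ?Y ?A))" by (rule d_P14t[OF WY t cY cx(3)])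
  moreover have "der (BAll c t (Conj ?Y ?A)) (BAll c t (Disj ?D ?\<psi>c))"
  proof (rule ctxBAll[OF _ t])
    show "der (Conj ?Y ?A) (Disj ?D ?\<psi>c)"
      using d_ccomm[OF WY WA] k d_dcomm[OF W\<psi>c WD] by (meson der_trans)
  qed
  moreover have "der (BAll c t (Disj ?D ?\<psi>c)) (Disj ?D (BAll c t ?\<psi>c))"
    by (rule d_P15t[OF WD W\<psi>c t cD cx(3)])
  moreover have "der (Disj ?D (BAll c t ?\<psi>c)) (Disj ?D (BAll x t \<psi>))"
    by (rule ctxDR[OF d_ball_rename[OF W\<psi> t cx] WD])
  moreover have "der (Disj ?D (BAll x t \<psi>)) (Disj (BAll x t \<psi>) ?D)"
    using WD W\<psi> t by (intro d_dcomm) auto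
  ultimately have "der ?Y (disjs (BAll x t \<psi> # gs'))" by (simp, meson der_trans)
  moreover have "set (BAll x t \<psi> # gs') \<subseteq> G" using f ba unfolding gs'_def by auto
  moreover have "set fs' \<subseteq> F" using f unfolding fs'_def by auto
  ultimately show False using cons unfolding incons_def by blast
qed

end


lemma finite_vars_set: "finite S \<Longrightarrow> finite (\<Union>\<phi>\<in>S. fv \<phi> \<union> bnd \<phi>)" by simp

lemma freshin_ex: "finite S \<Longrightarrow> \<exists>c. freshin c S"
proof -
  assume "finite S"
  then obtain c where "c \<notin> (\<Union>\<phi>\<in>S. fv \<phi> \<union> bnd \<phi>)" using fresh_var finite_vars_set by blast
  then show ?thesis unfolding freshin_def by blast
qed

definition fresh :: "('f, 'p) fm set \<Rightarrow> nat" where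
  "fresh S = (SOME c. freshin c S)"

lemma fresh_freshin: "finite S \<Longrightarrow> freshin (fresh S) S"
  unfolding fresh_def using freshin_ex by (metis someI_ex)

locale L2 = L FA PA T for FA :: "'f::countable \<Rightarrow> nat" and PA :: "'p::countable \<Rightarrow> nat" and T +
  fixes \<chi> \<chi>' :: "('f, 'p) fm"
  assumes WT: "\<forall>c \<in> T. fwf FA PA (fst c) \<and> fwf FA PA (snd c)"
    and W\<chi>: "fwf FA PA \<chi>" and W\<chi>': "fwf FA PA \<chi>'"
    and nder: "\<not> der \<chi> \<chi>'"
begin

definition enum :: "nat \<Rightarrow> ('f, 'p) fm" where
  "enum n = from_nat (fst (prod_decode n))"

lemma enum_hit: "enum (prod_encode (to_nat \<phi>, k)) = \<phi>"
  unfolding enum_def by simp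

definition step :: "nat \<Rightarrow> ('f, 'p) fm set \<times> ('f, 'p) fm set \<Rightarrow> ('f, 'p) fm set \<times> ('f, 'p) fm set" where
  "step n FG = (let F = fst FG; G = snd FG; \<phi> = enum n in
     if \<not> W \<phi> then (F, G)
     else if \<not> incons (insert \<phi> F) G then
       (case \<phi> of Ex x \<psi> \<Rightarrow> (insert (subst (Var(x := Var (fresh (insert \<phi> F \<union> G)))) \<psi>) (insert \<phi> F), G)
                | _ \<Rightarrow> (insert \<phi> F, G))
     else
       (case \<phi> of BAll x t \<psi> \<Rightarrow>
           (insert (Atom PIn [Var (fresh (F \<union> insert \<phi> G)), t]) F,
            insert (subst (Var(x := Var (fresh (F \<union> insert \<phi> G)))) \<psi>) (insert \<phi> G))
                | _ \<Rightarrow> (F, insert \<phi> G)))"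

primrec stage :: "nat \<Rightarrow> ('f, 'p) fm set \<times> ('f, 'p) fm set" where
  "stage 0 = ({\<chi>}, {\<chi>'})"
| "stage (Suc n) = step n (stage n)"

definition invar :: "('f, 'p) fm set \<times> ('f, 'p) fm set \<Rightarrow> bool" where
  "invar FG \<longleftrightarrow> finite (fst FG) \<and> finite (snd FG) \<and> (\<forall>a\<in>fst FG \<union> snd FG. W a) \<and> \<not> incons (fst FG) (snd FG)"

lemma incons_mono: "incons F G \<Longrightarrow> F \<subseteq> F' \<Longrightarrow> G \<subseteq> G' \<Longrightarrow> incons F' G'"
  unfolding incons_def by blast

lemma inv0: "invar (stage 0)"
proof -
  have "\<not> incons {\<chi>} {\<chi>'}"
  proof
    assume "incons {\<chi>} {\<chi>'}"
    then obtain fs gs where f: "set fs \<subseteq> {\<chi>}" "set gs \<subseteq> {\<chi>'}" "der (conjs fs) (disjs gs)"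
      unfolding incons_def by blast
    have "der \<chi> (conjs fs)" using f W\<chi> by (intro conjs_intro) (auto intro: dref)
    moreover have "der (disjs gs) \<chi>'" using f W\<chi>' by (intro disjs_elim) (auto intro: dref)
    ultimately have "der \<chi> \<chi>'" using f(3) by (meson der_trans)
    then show False using nder by blast
  qed
  then show ?thesis unfolding invar_def using W\<chi> W\<chi>' by auto
qed

lemma inv_step: assumes "invar FG" shows "invar (step n FG)"
proof -
  obtain F G where FG: "FG = (F, G)" by (cases FG)
  have fin: "finite F" "finite G" and WF: "\<forall>a\<in>F \<union> G. W a" and cons: "\<not> incons F G"
    using assms unfolding invar_def FG by auto
  let ?\<phi> = "enum n"
  show ?thesis
  proof (cases "W ?\<phi>")
    case False then show ?thesis using assms unfolding step_def FG by simp
  next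
    case W\<phi>: True
    show ?thesis
    proof (cases "incons (insert ?\<phi> F) G")
      case False
      show ?thesis
      proof (cases ?\<phi>)
        case (Ex x \<psi>)
        let ?c = "fresh (insert ?\<phi> F \<union> G)"
        have fr: "freshin ?c (insert ?\<phi> F \<union> G)" using fin by (intro fresh_freshin) auto
        have WF': "\<forall>a\<in>insert ?\<phi> F \<union> G. W a" using WF W\<phi> by auto
        have "\<not> incons (insert (subst (Var(x := Var ?c)) \<psi>) (insert ?\<phi> F)) G"
          by (rule ex_step[OF WF' False _ fr]) (use Ex in simp)
        moreover have "W (subst (Var(x := Var ?c)) \<psi>)" using W\<phi> Ex by (intro fwf_subst) auto
        ultimately show ?thesis using False Ex fin WF W\<phi> unfolding step_def FG invar_def by (simp add: Let_def)
      qed (use False fin WF W\<phi> in \<open>simp_all add: step_def FG invar_def Let_def\<close>)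
    next
      case True
      have cons2: "\<not> incons F (insert ?\<phi> G)" by (rule cut_step[OF WF W\<phi> cons True])
      show ?thesis
      proof (cases ?\<phi>)
        case (BAll x t \<psi>)
        let ?c = "fresh (F \<union> insert ?\<phi> G)"
        have fr: "freshin ?c (F \<union> insert ?\<phi> G)" using fin by (intro fresh_freshin) auto
        have WF': "\<forall>a\<in>F \<union> insert ?\<phi> G. W a" using WF W\<phi> by auto
        have "\<not> incons (insert (Atom PIn [Var ?c, t]) F) (insert (subst (Var(x := Var ?c)) \<psi>) (insert ?\<phi> G))"
          by (rule ball_step[OF WF' cons2 _ fr]) (use BAll in simp)
        moreover have "W (subst (Var(x := Var ?c)) \<psi>)" using W\<phi> BAll by (intro fwf_subst) auto
        moreover have "twf FA t" using W\<phi> BAll by simp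
        ultimately show ?thesis using True BAll fin WF W\<phi> unfolding step_def FG invar_def by (simp add: Let_def)
      qed (use True cons2 fin WF W\<phi> in \<open>simp_all add: step_def FG invar_def Let_def\<close>)
    qed
  qed
qed

lemma inv_stage: "invar (stage n)"
proof (induction n)
  case 0 show ?case by (rule inv0)
next
  case (Suc n) then show ?case by (simp add: inv_step)
qed

lemma step_mono: "fst FG \<subseteq> fst (step n FG) \<and> snd FG \<subseteq> snd (step n FG)"
  unfolding step_def Let_def by (auto split: fm.splits)

end


context L2 begin

definition FF where "FF = (\<Union>n. fst (stage n))"
definition GG where "GG = (\<Union>n. snd (stage n))"

lemma stage_mono: "m \<le> n \<Longrightarrow> fst (stage m) \<subseteq> fst (stage n) \<and> snd (stage m) \<subseteq> snd (stage n)"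
proof (induction n)
  case (Suc n)
  show ?case
  proof (cases "m = Suc n")
    case False
    then have "m \<le> n" using Suc by simp
    then show ?thesis using Suc.IH step_mono[of "stage n" n] by auto
  qed simp
qed simp

lemma fin_sub_F: "set fs \<subseteq> FF \<Longrightarrow> \<exists>n. set fs \<subseteq> fst (stage n)"
proof (induction fs)
  case (Cons a fs)
  then obtain n where n: "set fs \<subseteq> fst (stage n)" by auto
  obtain m where m: "a \<in> fst (stage m)" using Cons.prems unfolding FF_def by auto
  have "set (a # fs) \<subseteq> fst (stage (max n m))"
    using n m stage_mono[of n "max n m"] stage_mono[of m "max n m"] by auto
  then show ?case by blast
qed simp

lemma fin_sub_G: "set fs \<subseteq> GG \<Longrightarrow> \<exists>n. set fs \<subseteq> snd (stage n)"
proof (induction fs)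
  case (Cons a fs)
  then obtain n where n: "set fs \<subseteq> snd (stage n)" by auto
  obtain m where m: "a \<in> snd (stage m)" using Cons.prems unfolding GG_def by auto
  have "set (a # fs) \<subseteq> snd (stage (max n m))"
    using n m stage_mono[of n "max n m"] stage_mono[of m "max n m"] by auto
  then show ?case by blast
qed simp

lemma cons_FG: "\<not> incons FF GG"
proof
  assume "incons FF GG"
  then obtain fs gs where f: "set fs \<subseteq> FF" "set gs \<subseteq> GG" "der (conjs fs) (disjs gs)"
    unfolding incons_def by blast
  obtain n where n: "set fs \<subseteq> fst (stage n)" using fin_sub_F[OF f(1)] by blast
  obtain m where m: "set gs \<subseteq> snd (stage m)" using fin_sub_G[OF f(2)] by blast
  have "set fs \<subseteq> fst (stage (max n m))" "set gs \<subseteq> snd (stage (max n m))"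
    using n m stage_mono[of n "max n m"] stage_mono[of m "max n m"] by auto
  then have "incons (fst (stage (max n m))) (snd (stage (max n m)))"
    using f(3) unfolding incons_def by blast
  then show False using inv_stage[of "max n m"] unfolding invar_def by blast
qed

lemma W_FG: "a \<in> FF \<union> GG \<Longrightarrow> W a"
  using inv_stage unfolding FF_def GG_def invar_def by blast

lemma stage_sub: "fst (stage n) \<subseteq> FF" "snd (stage n) \<subseteq> GG"
  unfolding FF_def GG_def by auto

lemma step_at:
  assumes "enum n = \<phi>" "W \<phi>"
  shows "(\<not> incons (insert \<phi> (fst (stage n))) (snd (stage n)) \<longrightarrow>
            \<phi> \<in> fst (stage (Suc n)) \<and>
            (\<forall>x \<psi>. \<phi> = Ex x \<psi> \<longrightarrow> (let c = fresh (insert \<phi> (fst (stage n)) \<union> snd (stage n)) in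
                subst (Var(x := Var c)) \<psi> \<in> fst (stage (Suc n)))))
       \<and> (incons (insert \<phi> (fst (stage n))) (snd (stage n)) \<longrightarrow>
            \<phi> \<in> snd (stage (Suc n)) \<and>
            (\<forall>x t \<psi>. \<phi> = BAll x t \<psi> \<longrightarrow> (let c = fresh (fst (stage n) \<union> insert \<phi> (snd (stage n))) in
                Atom PIn [Var c, t] \<in> fst (stage (Suc n)) \<and>
                subst (Var(x := Var c)) \<psi> \<in> snd (stage (Suc n)))))"
  using assms by (cases \<phi>) (simp_all add: step_def Let_def)

lemma mem_disj: "a \<in> FF \<Longrightarrow> a \<in> GG \<Longrightarrow> False"
proof -
  assume a: "a \<in> FF" "a \<in> GG"
  have Wa: "W a" using a W_FG by blast
  have "der (conjs [a]) (disjs [a])"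
    using d_cE1[OF Wa d_top[OF Wa, THEN W_der2]] d_dI1[OF Wa d_bot[OF Wa, THEN W_der1]]
    by (simp, meson der_trans)
  then show False using cons_FG a unfolding incons_def
    by (metis empty_set empty_subsetI insert_subset list.simps(15))
qed

lemma total: "W \<phi> \<Longrightarrow> \<phi> \<in> FF \<or> \<phi> \<in> GG"
proof -
  assume W: "W \<phi>"
  let ?n = "prod_encode (to_nat \<phi>, 0)"
  have "enum ?n = \<phi>" by (rule enum_hit)
  from step_at[OF this W] show ?thesis using stage_sub[of "Suc ?n"] by blast
qed

lemma FF_closed: "set fs \<subseteq> FF \<Longrightarrow> der (conjs fs) \<psi> \<Longrightarrow> \<psi> \<in> FF"
proof (rule ccontr)
  assume f: "set fs \<subseteq> FF" "der (conjs fs) \<psi>" "\<psi> \<notin> FF"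
  have W: "W \<psi>" using f(2) W_der2 by blast
  then have "\<psi> \<in> GG" using total f(3) by blast
  moreover have "der (conjs fs) (disjs [\<psi>])"
    using f(2) d_dI1[OF W d_bot[OF W, THEN W_der1]] by (simp, meson der_trans)
  ultimately show False using cons_FG f(1) unfolding incons_def
    by (metis empty_set empty_subsetI insert_subset list.simps(15))
qed

lemma FF_der: "\<phi> \<in> FF \<Longrightarrow> der \<phi> \<psi> \<Longrightarrow> \<psi> \<in> FF"
proof -
  assume a: "\<phi> \<in> FF" "der \<phi> \<psi>"
  have W: "W \<phi>" using a W_der1 by blast
  have "der (conjs [\<phi>]) \<psi>" using d_cE1[OF W d_top[OF W, THEN W_der2]] a(2) by (simp, meson der_trans)
  then show ?thesis using FF_closed a by (metis empty_set empty_subsetI insert_subset list.simps(15))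
qed

lemma Top_FF: "Top \<in> FF"
  using FF_closed[of "[]" Top] dref[of Top] by simp

lemma Bot_FF: "Bot \<notin> FF"
proof
  assume "Bot \<in> FF"
  moreover have "der (conjs [Bot]) (disjs [])" using d_cE1[of Bot Top] by simp
  ultimately show False using cons_FG unfolding incons_def
    by (metis empty_set empty_subsetI insert_subset list.simps(15))
qed

lemma Conj_FF: "W (Conj A B) \<Longrightarrow> Conj A B \<in> FF \<longleftrightarrow> A \<in> FF \<and> B \<in> FF"
proof
  assume W: "W (Conj A B)" and c: "Conj A B \<in> FF"
  show "A \<in> FF \<and> B \<in> FF" using W c FF_der d_cE1 d_cE2 by force
next
  assume W: "W (Conj A B)" and ab: "A \<in> FF \<and> B \<in> FF"
  have WA: "W A" and WB: "W B" using W by auto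
  have "der (conjs [A, B]) (Conj A B)"
  proof (rule d_conjI)
    show "der (conjs [A, B]) A" using WA WB by (intro conjs_mem) auto
    show "der (conjs [A, B]) B" using WA WB by (intro conjs_mem) auto
  qed
  then show "Conj A B \<in> FF" using FF_closed[of "[A, B]"] ab by simp
qed

lemma Disj_FF: "W (Disj A B) \<Longrightarrow> Disj A B \<in> FF \<longleftrightarrow> A \<in> FF \<or> B \<in> FF"
proof
  assume W: "W (Disj A B)" and d: "Disj A B \<in> FF"
  have WA: "W A" and WB: "W B" using W by auto
  show "A \<in> FF \<or> B \<in> FF"
  proof (rule ccontr)
    assume "\<not> (A \<in> FF \<or> B \<in> FF)"
    then have "A \<in> GG" "B \<in> GG" using total WA WB by blast+
    moreover have "der (conjs [Disj A B]) (disjs [A, B])"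
    proof -
      have "der (Disj A B) (disjs [A, B])" using WA WB
        by (intro d_disjE disjs_mem) auto
      then show ?thesis using d_cE1[OF W d_top[OF W, THEN W_der2]] by (simp, meson der_trans)
    qed
    ultimately show False using cons_FG d unfolding incons_def
      by (metis empty_set empty_subsetI insert_subset list.simps(15))
  qed
next
  assume W: "W (Disj A B)" and ab: "A \<in> FF \<or> B \<in> FF"
  have WA: "W A" and WB: "W B" using W by auto
  show "Disj A B \<in> FF" using ab FF_der d_dI1[OF WA WB] d_dI2[OF WA WB] by blast
qed

lemma henkin_ex:
  assumes "Ex x \<psi> \<in> FF"
  shows "\<exists>c. freshin c {Ex x \<psi>} \<and> subst (Var(x := Var c)) \<psi> \<in> FF"
proof -
  let ?\<phi> = "Ex x \<psi>"
  let ?n = "prod_encode (to_nat ?\<phi>, 0)"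
  have e: "enum ?n = ?\<phi>" by (rule enum_hit)
  have W: "W ?\<phi>" using assms W_FG by blast
  have "insert ?\<phi> (fst (stage ?n)) \<subseteq> FF" "snd (stage ?n) \<subseteq> GG" using assms stage_sub by auto
  then have nc: "\<not> incons (insert ?\<phi> (fst (stage ?n))) (snd (stage ?n))" using cons_FG incons_mono by blast
  let ?c = "fresh (insert ?\<phi> (fst (stage ?n)) \<union> snd (stage ?n))"
  have fin: "finite (insert ?\<phi> (fst (stage ?n)) \<union> snd (stage ?n))" using inv_stage[of ?n] unfolding invar_def by auto
  have "freshin ?c {?\<phi>}" using fresh_freshin[OF fin] unfolding freshin_def by auto
  moreover have "subst (Var(x := Var ?c)) \<psi> \<in> FF"
    using step_at[OF e W] nc stage_sub[of "Suc ?n"] by (auto simp: Let_def)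
  ultimately show ?thesis by blast
qed

lemma henkin_ball:
  assumes "BAll x t \<psi> \<in> GG"
  shows "\<exists>c. freshin c {BAll x t \<psi>} \<and> Atom PIn [Var c, t] \<in> FF \<and> subst (Var(x := Var c)) \<psi> \<in> GG"
proof -
  let ?\<phi> = "BAll x t \<psi>"
  let ?n = "prod_encode (to_nat ?\<phi>, 0)"
  have e: "enum ?n = ?\<phi>" by (rule enum_hit)
  have W: "W ?\<phi>" using assms W_FG by blast
  have inc: "incons (insert ?\<phi> (fst (stage ?n))) (snd (stage ?n))"
  proof (rule ccontr)
    assume "\<not> incons (insert ?\<phi> (fst (stage ?n))) (snd (stage ?n))"
    then have "?\<phi> \<in> FF" using step_at[OF e W] stage_sub[of "Suc ?n"] by blast
    then show False using mem_disj assms by blast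
  qed
  let ?c = "fresh (fst (stage ?n) \<union> insert ?\<phi> (snd (stage ?n)))"
  have fin: "finite (fst (stage ?n) \<union> insert ?\<phi> (snd (stage ?n)))" using inv_stage[of ?n] unfolding invar_def by auto
  have "freshin ?c {?\<phi>}" using fresh_freshin[OF fin] unfolding freshin_def by auto
  moreover have "Atom PIn [Var ?c, t] \<in> FF \<and> subst (Var(x := Var ?c)) \<psi> \<in> GG"
    using step_at[OF e W] inc stage_sub[of "Suc ?n"] by (auto simp: Let_def)
  ultimately show ?thesis by blast
qed

end


context L2 begin

lemma eq_refl: "twf FA a \<Longrightarrow> Atom PEq [a, a] \<in> FF"
  using FF_der[OF Top_FF d_refl] by blast

lemma eq_sym: "Atom PEq [a, b] \<in> FF \<Longrightarrow> Atom PEq [b, a] \<in> FF"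
proof -
  assume h: "Atom PEq [a, b] \<in> FF"
  then have "W (Atom PEq [a, b])" using W_FG by blast
  then have "twf FA a" "twf FA b" by auto
  then show ?thesis using FF_der[OF h d_sym] by blast
qed

lemma eq_trans: "Atom PEq [a, b] \<in> FF \<Longrightarrow> Atom PEq [b, c] \<in> FF \<Longrightarrow> Atom PEq [a, c] \<in> FF"
proof -
  assume h: "Atom PEq [a, b] \<in> FF" "Atom PEq [b, c] \<in> FF"
  then have "W (Atom PEq [a, b])" "W (Atom PEq [b, c])" using W_FG by blast+
  then have t: "twf FA a" "twf FA b" "twf FA c" by auto
  have "Conj (Atom PEq [a, b]) (Atom PEq [b, c]) \<in> FF" using h t by (subst Conj_FF) auto
  then show ?thesis using FF_der d_etrans[OF t] by blast
qed

lemma ex_eq_FF: "twf FA t \<Longrightarrow> w \<notin> tvars t \<Longrightarrow> Ex w (Atom PEq [Var w, t]) \<in> FF"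
proof -
  assume t: "twf FA t" and w: "w \<notin> tvars t"
  have "der Top (Ex w (Conj Top (Atom PEq [Var w, t])))" by (rule d_exeq) (use t w in auto)
  moreover have "der (Ex w (Conj Top (Atom PEq [Var w, t]))) (Ex w (Atom PEq [Var w, t]))"
    using t by (intro ctxEx d_cE2) auto
  ultimately show ?thesis using FF_der[OF Top_FF] der_trans by blast
qed

lemma infinite_class: "infinite {c. vEq c x \<in> FF}"
proof -
  define w where "w = Suc x"
  let ?\<phi> = "Ex w (vEq w x) :: ('f, 'p) fm"
  have \<phi>F: "?\<phi> \<in> FF" using ex_eq_FF[of "Var x" w] unfolding w_def by simp
  have W: "W ?\<phi>" by simp
  define nk where "nk k = prod_encode (to_nat ?\<phi>, k)" for k
  define cw where "cw k = fresh (insert ?\<phi> (fst (stage (nk k))) \<union> snd (stage (nk k)))" for k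
  have fin: "finite (insert ?\<phi> (fst (stage (nk k))) \<union> snd (stage (nk k)))" for k
    using inv_stage[of "nk k"] unfolding invar_def by auto
  have wit: "vEq (cw k) x \<in> fst (stage (Suc (nk k)))" for k
  proof -
    have e: "enum (nk k) = ?\<phi>" unfolding nk_def enum_def by simp
    have "insert ?\<phi> (fst (stage (nk k))) \<subseteq> FF" "snd (stage (nk k)) \<subseteq> GG" using \<phi>F stage_sub by auto
    then have nc: "\<not> incons (insert ?\<phi> (fst (stage (nk k)))) (snd (stage (nk k)))"
      using cons_FG incons_mono by blast
    have "subst (Var(w := Var (cw k))) (vEq w x) \<in> fst (stage (Suc (nk k)))"
      using step_at[OF e W] nc unfolding cw_def by (auto simp: Let_def)
    then show ?thesis unfolding w_def by simp
  qed
  have less: "cw k \<noteq> cw k'" if "nk k < nk k'" for k k'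
  proof -
    have "vEq (cw k) x \<in> fst (stage (nk k'))"
      using wit[of k] stage_mono[of "Suc (nk k)" "nk k'"] that by auto
    moreover have "freshin (cw k') (insert ?\<phi> (fst (stage (nk k'))) \<union> snd (stage (nk k')))"
      unfolding cw_def by (rule fresh_freshin[OF fin])
    ultimately have "cw k' \<notin> fv (vEq (cw k) x :: ('f, 'p) fm)" unfolding freshin_def by blast
    then show ?thesis by auto
  qed
  have "inj cw"
  proof (rule injI)
    fix k k' assume eq: "cw k = cw k'"
    show "k = k'"
    proof (rule ccontr)
      assume "k \<noteq> k'"
      then have "nk k \<noteq> nk k'" unfolding nk_def using inj_prod_encode[of UNIV] by (auto dest: injD)
      then show False using less eq by (metis linorder_neqE_nat)
    qed
  qed
  then have "infinite (range cw)" using finite_imageD infinite_UNIV_nat by blast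
  moreover have "range cw \<subseteq> {c. vEq c x \<in> FF}" using wit stage_sub by blast
  ultimately show ?thesis using infinite_super by blast
qed

lemma class_avoid: "finite S \<Longrightarrow> \<exists>b. vEq b x \<in> FF \<and> b \<notin> S"
  using infinite_class[of x] by (metis (mono_tags, lifting) finite_subset mem_Collect_eq subsetI)

end


context L2 begin

definition rep :: "nat \<Rightarrow> nat" where
  "rep x = (LEAST y. vEq y x \<in> FF)"

lemma rep_eq: "vEq (rep x) x \<in> FF"
  unfolding rep_def by (rule LeastI[of _ x]) (rule eq_refl, simp)

lemma rep_iff: "rep x = rep y \<longleftrightarrow> vEq x y \<in> FF"
proof
  assume "rep x = rep y"
  then show "vEq x y \<in> FF" using rep_eq[of x] rep_eq[of y] by (metis eq_sym eq_trans)
next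
  assume h: "vEq x y \<in> FF"
  have e: "(\<lambda>z. vEq z x \<in> FF) = (\<lambda>z. vEq z y \<in> FF)"
    using h by (intro ext iffI) (auto intro: eq_trans eq_sym)
  show "rep x = rep y" unfolding rep_def by (simp only: e)
qed

lemma rep_rep: "rep (rep x) = rep x"
  using rep_iff rep_eq by blast

definition val :: "'f trm \<Rightarrow> nat" where
  "val s = rep (SOME v. Atom PEq [Var v, s] \<in> FF)"

lemma val_eq: assumes s: "twf FA s" shows "Atom PEq [Var (val s), s] \<in> FF"
proof -
  obtain w where w: "w \<notin> tvars s" using fresh_var[of "tvars s"] by auto
  have "Ex w (Atom PEq [Var w, s]) \<in> FF" by (rule ex_eq_FF[OF s w])
  then obtain c where "subst (Var(w := Var c)) (Atom PEq [Var w, s]) \<in> FF"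
    using henkin_ex by blast
  moreover have "tsubst (Var(w := Var c)) s = s"
    using tsubst_cong[of s "Var(w := Var c)" Var] w by (metis fun_upd_other tsubst_Var)
  ultimately have "Atom PEq [Var c, s] \<in> FF" by simp
  then have ex: "\<exists>v. Atom PEq [Var v, s] \<in> FF" by blast
  define v where "v = (SOME v. Atom PEq [Var v, s] \<in> FF)"
  have v: "Atom PEq [Var v, s] \<in> FF" unfolding v_def using someI_ex[OF ex] .
  have "val s = rep v" unfolding val_def v_def ..
  then show ?thesis using rep_eq[of v] v eq_trans by metis
qed

lemma rep_val: "twf FA s \<Longrightarrow> rep (val s) = val s"
  unfolding val_def by (simp add: rep_rep)

lemma val_cong: assumes "twf FA s" "twf FA s'" "Atom PEq [s, s'] \<in> FF" shows "val s = val s'"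
proof -
  have "vEq (val s) (val s') \<in> FF"
    using val_eq[OF assms(1)] val_eq[OF assms(2)] assms(3) by (meson eq_sym eq_trans)
  then have "rep (val s) = rep (val s')" using rep_iff by blast
  then show ?thesis using rep_val assms by metis
qed

lemma val_Var: "val (Var y) = rep y"
proof -
  have "vEq (val (Var y)) y \<in> FF" using val_eq[of "Var y"] by simp
  then have "rep (val (Var y)) = rep y" using rep_iff by blast
  then show ?thesis using rep_val[of "Var y"] by simp
qed

lemma seq_subst:
  assumes WA: "W (Atom p ts)" and t1: "\<forall>v. twf FA (\<tau>1 v)" and t2: "\<forall>v. twf FA (\<tau>2 v)"
    and eq: "\<forall>v\<in>fv (Atom p ts). Atom PEq [\<tau>1 v, \<tau>2 v] \<in> FF"
    and h: "subst \<tau>1 (Atom p ts) \<in> FF"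
  shows "subst \<tau>2 (Atom p ts) \<in> FF"
proof -
  let ?A = "Atom p ts"
  define tS where "tS S v = (if v \<in> S then \<tau>2 v else \<tau>1 v)" for S v
  have tw: "\<forall>v. twf FA (tS S v)" for S using t1 t2 unfolding tS_def by auto
  have "finite S \<Longrightarrow> S \<subseteq> fv ?A \<Longrightarrow> subst (tS S) ?A \<in> FF" for S
  proof (induction S rule: finite_induct)
    case empty
    have "tS {} = \<tau>1" unfolding tS_def by auto
    then show ?case using h by simp
  next
    case (insert z S)
    have IH: "subst (tS S) ?A \<in> FF" using insert by auto
    have e1: "(tS S)(z := \<tau>1 z) = tS S" using insert unfolding tS_def by auto
    have e2: "(tS S)(z := \<tau>2 z) = tS (insert z S)" unfolding tS_def by auto
    have z: "Atom PEq [\<tau>1 z, \<tau>2 z] \<in> FF" using eq insert by auto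
    have d: "der (Conj (Atom PEq [\<tau>1 z, \<tau>2 z]) (subst ((tS S)(z := \<tau>1 z)) ?A)) (subst ((tS S)(z := \<tau>2 z)) ?A)"
      by (rule d_eqsub) (use WA t1 t2 tw in auto)
    have "Conj (Atom PEq [\<tau>1 z, \<tau>2 z]) (subst (tS S) ?A) \<in> FF"
    proof (subst Conj_FF)
      show "W (Conj (Atom PEq [\<tau>1 z, \<tau>2 z]) (subst (tS S) ?A))"
        using WA fwf_subst[OF WA tw[of S]] t1 t2 by simp
      show "Atom PEq [\<tau>1 z, \<tau>2 z] \<in> FF \<and> subst (tS S) ?A \<in> FF" using z IH by simp
    qed
    then show ?case using FF_der d e1 e2 by simp
  qed
  then have "subst (tS (fv ?A)) ?A \<in> FF" by simp
  moreover have "subst (tS (fv ?A)) ?A = subst \<tau>2 ?A"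
    by (rule subst_cong) (simp add: tS_def)
  ultimately show ?thesis by metis
qed

end


lemma map_upt_nth: "map (\<lambda>j. if j < length ss then f (ss ! j) else g j) [0..<length ss] = map f ss"
  by (rule nth_equalityI) auto

context L2 begin

lemma atom_val:
  assumes WA: "W (Atom p ss)"
  shows "Atom p ss \<in> FF \<longleftrightarrow> Atom p (map (\<lambda>s. Var (val s)) ss) \<in> FF"
proof -
  let ?n = "length ss"
  let ?A = "Atom p (map Var [0..<?n]) :: ('f, 'p) fm"
  have tw: "\<forall>s\<in>set ss. twf FA s" using WA by (simp add: list_all_iff)
  have WA': "W ?A" using WA by (simp add: list_all_iff)
  define \<tau>1 where "\<tau>1 j = (if j < ?n then ss ! j else Var j)" for j
  define \<tau>2 where "\<tau>2 j = (if j < ?n then Var (val (ss ! j)) else Var j :: 'f trm)" for j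
  have t1: "\<forall>v. twf FA (\<tau>1 v)" unfolding \<tau>1_def using tw by auto
  have t2: "\<forall>v. twf FA (\<tau>2 v)" unfolding \<tau>2_def by auto
  have e1: "subst \<tau>1 ?A = Atom p ss"
    using map_upt_nth[of ss "\<lambda>s. s" Var] unfolding \<tau>1_def by (simp add: comp_def)
  have e2: "subst \<tau>2 ?A = Atom p (map (\<lambda>s. Var (val s)) ss)"
    using map_upt_nth[of ss "\<lambda>s. Var (val s)" Var] unfolding \<tau>2_def by (simp add: comp_def)
  have eq12: "\<forall>v\<in>fv ?A. Atom PEq [\<tau>1 v, \<tau>2 v] \<in> FF"
    unfolding \<tau>1_def \<tau>2_def using tw by (auto intro!: eq_sym val_eq)
  have eq21: "\<forall>v\<in>fv ?A. Atom PEq [\<tau>2 v, \<tau>1 v] \<in> FF"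
    unfolding \<tau>1_def \<tau>2_def using tw by (auto intro!: val_eq)
  show ?thesis
    using seq_subst[OF WA' t1 t2 eq12] seq_subst[OF WA' t2 t1 eq21] e1 e2 by auto
qed

lemma fn_val:
  assumes tF: "twf FA (Fn f ss)"
  shows "val (Fn f (map (\<lambda>s. Var (val s)) ss)) = val (Fn f ss)"
proof -
  let ?n = "length ss"
  let ?X = "Fn f (map (\<lambda>s. Var (val s)) ss)"
  let ?A = "Atom PEq [Var ?n, Fn f (map Var [0..<?n])] :: ('f, 'p) fm"
  have tw: "\<forall>s\<in>set ss. twf FA s" and len: "?n = FA f" using tF by (auto simp: list_all_iff)
  have tX: "twf FA ?X" using len by (simp add: list_all_iff)
  have WA': "W ?A" using len by (simp add: list_all_iff)
  define \<tau>1 where "\<tau>1 j = (if j < ?n then Var (val (ss ! j)) else if j = ?n then ?X else Var j)" for j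
  define \<tau>2 where "\<tau>2 j = (if j < ?n then ss ! j else if j = ?n then ?X else Var j)" for j
  have t1: "\<forall>v. twf FA (\<tau>1 v)" unfolding \<tau>1_def using tX by auto
  have t2: "\<forall>v. twf FA (\<tau>2 v)" unfolding \<tau>2_def using tw tX by auto
  have e1: "subst \<tau>1 ?A = Atom PEq [?X, ?X]"
    using map_upt_nth[of ss "\<lambda>s. Var (val s)" "\<lambda>j. if j = ?n then ?X else Var j"] unfolding \<tau>1_def
    by (simp add: comp_def)
  have e2: "subst \<tau>2 ?A = Atom PEq [?X, Fn f ss]"
    using map_upt_nth[of ss "\<lambda>s. s" "\<lambda>j. if j = ?n then ?X else Var j"] unfolding \<tau>2_def
    by (simp add: comp_def)
  have eq12: "\<forall>v\<in>fv ?A. Atom PEq [\<tau>1 v, \<tau>2 v] \<in> FF"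
    unfolding \<tau>1_def \<tau>2_def using tw tX by (auto intro!: val_eq eq_refl)
  have "Atom PEq [?X, ?X] \<in> FF" by (rule eq_refl[OF tX])
  then have "Atom PEq [?X, Fn f ss] \<in> FF" using seq_subst[OF WA' t1 t2 eq12] e1 e2 by simp
  then show ?thesis using val_cong tX tF by blast
qed

definition Mod :: "('f, 'p) struc" where
  "Mod = Struc (range rep) (\<lambda>f as. val (Fn f (map Var as))) (\<lambda>p as. Atom p (map Var as) \<in> FF)"

lemma Mod_simps[simp]: "dom Mod = range rep" "fint Mod f as = val (Fn f (map Var as))"
  "pint Mod p as = (Atom p (map Var as) \<in> FF)"
  unfolding Mod_def by simp_all

lemma teval_Mod: "twf FA t \<Longrightarrow> teval Mod (\<lambda>v. rep (\<rho> v)) t = val (tsubst (\<lambda>v. Var (\<rho> v)) t)"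
proof (induction t)
  case (Var x) then show ?case by (simp add: val_Var)
next
  case (Fn f ts)
  let ?\<sigma> = "\<lambda>v. Var (\<rho> v)"
  have IH: "map (teval Mod (\<lambda>v. rep (\<rho> v))) ts = map (\<lambda>t. val (tsubst ?\<sigma> t)) ts"
    using Fn by (auto simp: list_all_iff)
  have tF: "twf FA (Fn f (map (tsubst ?\<sigma>) ts))"
    using twf_tsubst[OF Fn.prems, of ?\<sigma>] by simp
  have "teval Mod (\<lambda>v. rep (\<rho> v)) (Fn f ts) = val (Fn f (map Var (map (teval Mod (\<lambda>v. rep (\<rho> v))) ts)))"
    by simp
  also have "\<dots> = val (Fn f (map Var (map (\<lambda>t. val (tsubst ?\<sigma> t)) ts)))" by (simp only: IH)
  also have "\<dots> = val (Fn f (map (\<lambda>s. Var (val s)) (map (tsubst ?\<sigma>) ts)))" by (simp add: comp_def)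
  also have "\<dots> = val (Fn f (map (tsubst ?\<sigma>) ts))" by (rule fn_val[OF tF])
  finally show ?case by simp
qed

end


definition cnd :: "('f, 'p) fm \<Rightarrow> (nat \<Rightarrow> nat) \<Rightarrow> bool" where
  "cnd \<phi> \<rho> \<longleftrightarrow> (\<forall>v\<in>fv \<phi>. \<rho> v = v \<or> \<rho> v \<notin> bnd \<phi>)"

lemma cnd_substble: "cnd \<phi> \<rho> \<Longrightarrow> substble (\<lambda>v. Var (\<rho> v)) \<phi>"
  unfolding cnd_def by (rule substble_crit) auto

lemma comp_x:
  assumes "\<forall>v\<in>fv \<psi> - {x}. \<rho> v \<noteq> x" "substble (\<lambda>v. Var ((\<rho>(x := x)) v)) \<psi>"
  shows "subst (Var(x := Var c)) (subst (\<lambda>v. Var ((\<rho>(x := x)) v)) \<psi>) = subst (\<lambda>v. Var ((\<rho>(x := c)) v)) \<psi>"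
  unfolding subst_comp[OF assms(2)] by (rule subst_cong) (use assms(1) in auto)

lemma upd_vs: "(\<lambda>v. Var (\<rho> v))(x := Var y) = (\<lambda>v. Var ((\<rho>(x := y)) v))"
  by auto

context L2 begin

lemma in_val: "twf FA t \<Longrightarrow> Atom PIn [Var a, t] \<in> FF \<longleftrightarrow> Atom PIn [Var (rep a), Var (val t)] \<in> FF"
  using atom_val[of PIn "[Var a, t]"] by (simp add: val_Var)

lemma truth:
  "W \<phi> \<Longrightarrow> cnd \<phi> \<rho> \<Longrightarrow> sat Mod (\<lambda>v. rep (\<rho> v)) \<phi> \<longleftrightarrow> subst (\<lambda>v. Var (\<rho> v)) \<phi> \<in> FF"
proof (induction \<phi> arbitrary: \<rho>)
  case Top then show ?case using Top_FF by simp
next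
  case Bot then show ?case using Bot_FF by simp
next
  case (Atom p ts)
  let ?\<sigma> = "\<lambda>v. Var (\<rho> v)"
  have tw: "\<forall>t\<in>set ts. twf FA t" using Atom.prems by (simp add: list_all_iff)
  have IHm: "map (teval Mod (\<lambda>v. rep (\<rho> v))) ts = map (\<lambda>t. val (tsubst ?\<sigma> t)) ts"
    using tw teval_Mod by auto
  have "sat Mod (\<lambda>v. rep (\<rho> v)) (Atom p ts) = (Atom p (map Var (map (teval Mod (\<lambda>v. rep (\<rho> v))) ts)) \<in> FF)"
    by simp
  also have "\<dots> = (Atom p (map Var (map (\<lambda>t. val (tsubst ?\<sigma> t)) ts)) \<in> FF)" by (simp only: IHm)
  also have "\<dots> = (Atom p (map (\<lambda>s. Var (val s)) (map (tsubst ?\<sigma>) ts)) \<in> FF)"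
    by (simp add: comp_def)
  also have "\<dots> = (Atom p (map (tsubst ?\<sigma>) ts) \<in> FF)"
  proof (rule atom_val[symmetric])
    show "W (Atom p (map (tsubst ?\<sigma>) ts))" using Atom.prems by (simp add: list_all_iff twf_tsubst)
  qed
  finally show ?case by simp
next
  case (Conj a b)
  have ca: "cnd a \<rho>" and cb: "cnd b \<rho>" using Conj.prems unfolding cnd_def by auto
  have W: "W (subst (\<lambda>v. Var (\<rho> v)) (Conj a b))" using Conj.prems(1) by (intro fwf_subst) auto
  show ?case using Conj.IH(1)[OF _ ca] Conj.IH(2)[OF _ cb] Conj.prems Conj_FF[OF W[simplified subst.simps]] by simp
next
  case (Disj a b)
  have ca: "cnd a \<rho>" and cb: "cnd b \<rho>" using Disj.prems unfolding cnd_def by auto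
  have W: "W (subst (\<lambda>v. Var (\<rho> v)) (Disj a b))" using Disj.prems(1) by (intro fwf_subst) auto
  show ?case using Disj.IH(1)[OF _ ca] Disj.IH(2)[OF _ cb] Disj.prems Disj_FF[OF W[simplified subst.simps]] by simp
next
  case (Ex x \<psi>)
  let ?e = "\<lambda>v. rep (\<rho> v)"
  let ?\<psi>' = "subst (\<lambda>v. Var ((\<rho>(x := x)) v)) \<psi>"
  have W\<psi>: "W \<psi>" using Ex.prems by simp
  have hx: "\<forall>v\<in>fv \<psi> - {x}. \<rho> v \<noteq> x"
  proof (intro ballI notI)
    fix v assume v: "v \<in> fv \<psi> - {x}" and r: "\<rho> v = x"
    then have "v \<in> fv (Ex x \<psi>)" by auto
    then have "\<rho> v = v \<or> \<rho> v \<notin> bnd (Ex x \<psi>)" using Ex.prems(2) unfolding cnd_def by blast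
    then show False using v r by auto
  qed
  have cndu: "cnd \<psi> (\<rho>(x := b))" if "b = x \<or> b \<notin> bnd \<psi>" for b
    using Ex.prems that unfolding cnd_def by auto
  have eqs: "subst (\<lambda>v. Var (\<rho> v)) (Ex x \<psi>) = Ex x ?\<psi>'" by (simp add: upd_vs)
  have sx: "substble (\<lambda>v. Var ((\<rho>(x := x)) v)) \<psi>" by (rule cnd_substble[OF cndu]) simp
  show ?case
  proof
    assume "sat Mod ?e (Ex x \<psi>)"
    then obtain a where a: "a \<in> range rep" "sat Mod (?e(x := a)) \<psi>" by auto
    then obtain y where y: "a = rep y" by auto
    obtain b where b: "vEq b y \<in> FF" "b \<notin> bnd \<psi>" using class_avoid[of "bnd \<psi>" y] by auto
    have "rep b = a" using b y rep_iff by blast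
    then have "?e(x := a) = (\<lambda>v. rep ((\<rho>(x := b)) v))" by auto
    then have "subst (\<lambda>v. Var ((\<rho>(x := b)) v)) \<psi> \<in> FF"
      using Ex.IH[OF W\<psi> cndu] a b by auto
    moreover have "der (subst (\<lambda>v. Var ((\<rho>(x := b)) v)) \<psi>) (subst (\<lambda>v. Var ((\<rho>(x := b)) v)) (Ex x \<psi>))"
    proof (rule der_ax[of "(\<psi>, Ex x \<psi>)" "\<lambda>v. Var ((\<rho>(x := b)) v)", unfolded fst_conv snd_conv])
      show "(\<psi>, Ex x \<psi>) \<in> T \<union> logax FA PA" using W\<psi> by (auto intro: logax.P10)
      show "substble (\<lambda>v. Var ((\<rho>(x := b)) v)) \<psi>" by (rule cnd_substble[OF cndu]) (use b in simp)
      show "substble (\<lambda>v. Var ((\<rho>(x := b)) v)) (Ex x \<psi>)"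
        by (rule substble_crit) (use Ex.prems in \<open>auto simp: cnd_def\<close>)
      show "W (subst (\<lambda>v. Var ((\<rho>(x := b)) v)) \<psi>)" using W\<psi> by (intro fwf_subst) auto
      show "W (subst (\<lambda>v. Var ((\<rho>(x := b)) v)) (Ex x \<psi>))" using W\<psi> by (intro fwf_subst) auto
    qed
    moreover have "subst (\<lambda>v. Var ((\<rho>(x := b)) v)) (Ex x \<psi>) = subst (\<lambda>v. Var (\<rho> v)) (Ex x \<psi>)"
    proof -
      have h: "(\<lambda>v. Var ((\<rho>(x := b)) v))(x := Var x) = (\<lambda>v. Var (\<rho> v))(x := Var x)" by auto
      show ?thesis by (simp only: subst.simps h)
    qed
    ultimately show "subst (\<lambda>v. Var (\<rho> v)) (Ex x \<psi>) \<in> FF" using FF_der by metis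
  next
    assume "subst (\<lambda>v. Var (\<rho> v)) (Ex x \<psi>) \<in> FF"
    then have "Ex x ?\<psi>' \<in> FF" using eqs by simp
    then obtain c where c: "freshin c {Ex x ?\<psi>'}" "subst (Var(x := Var c)) ?\<psi>' \<in> FF"
      using henkin_ex by blast
    have cb: "c \<notin> bnd \<psi>" using c(1) unfolding freshin_def by simp
    have "subst (\<lambda>v. Var ((\<rho>(x := c)) v)) \<psi> \<in> FF" using c(2) comp_x[OF hx sx] by simp
    then have "sat Mod (\<lambda>v. rep ((\<rho>(x := c)) v)) \<psi>" using Ex.IH[OF W\<psi> cndu] cb by blast
    moreover have "(\<lambda>v. rep ((\<rho>(x := c)) v)) = ?e(x := rep c)" by auto
    ultimately show "sat Mod ?e (Ex x \<psi>)" by auto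
  qed
next
  case (BAll x t \<psi>)
  let ?e = "\<lambda>v. rep (\<rho> v)"
  let ?\<psi>' = "subst (\<lambda>v. Var ((\<rho>(x := x)) v)) \<psi>"
  let ?t' = "tsubst (\<lambda>v. Var (\<rho> v)) t"
  have W\<psi>: "W \<psi>" and tw: "twf FA t" using BAll.prems by simp_all
  have tw': "twf FA ?t'" using tw by (intro twf_tsubst) auto
  have hx: "\<forall>v\<in>fv \<psi> - {x}. \<rho> v \<noteq> x"
  proof (intro ballI notI)
    fix v assume v: "v \<in> fv \<psi> - {x}" and r: "\<rho> v = x"
    then have "v \<in> fv (BAll x t \<psi>)" by auto
    then have "\<rho> v = v \<or> \<rho> v \<notin> bnd (BAll x t \<psi>)" using BAll.prems(2) unfolding cnd_def by blast
    then show False using v r by auto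
  qed
  have cndu: "cnd \<psi> (\<rho>(x := b))" if "b = x \<or> b \<notin> bnd \<psi>" for b
    using BAll.prems that unfolding cnd_def by auto
  have eqs: "subst (\<lambda>v. Var (\<rho> v)) (BAll x t \<psi>) = BAll x ?t' ?\<psi>'" by (simp add: upd_vs)
  have sx: "substble (\<lambda>v. Var ((\<rho>(x := x)) v)) \<psi>" by (rule cnd_substble[OF cndu]) simp
  have te: "teval Mod ?e t = val ?t'" by (rule teval_Mod[OF tw])
  have satB: "sat Mod ?e (BAll x t \<psi>) \<longleftrightarrow>
     (\<forall>a\<in>range rep. Atom PIn [Var a, Var (val ?t')] \<in> FF \<longrightarrow> sat Mod (?e(x := a)) \<psi>)"
    using te by simp
  show ?case
  proof
    assume S: "sat Mod ?e (BAll x t \<psi>)"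
    show "subst (\<lambda>v. Var (\<rho> v)) (BAll x t \<psi>) \<in> FF"
    proof (rule ccontr)
      assume "subst (\<lambda>v. Var (\<rho> v)) (BAll x t \<psi>) \<notin> FF"
      then have "BAll x ?t' ?\<psi>' \<notin> FF" using eqs by simp
      moreover have "W (BAll x ?t' ?\<psi>')" using W\<psi> tw' by (simp add: fwf_subst)
      ultimately have "BAll x ?t' ?\<psi>' \<in> GG" using total by blast
      then obtain c where c: "freshin c {BAll x ?t' ?\<psi>'}" "Atom PIn [Var c, ?t'] \<in> FF"
        "subst (Var(x := Var c)) ?\<psi>' \<in> GG" using henkin_ball by blast
      have cb: "c \<notin> bnd \<psi>" using c(1) unfolding freshin_def by simp
      have "Atom PIn [Var (rep c), Var (val ?t')] \<in> FF" using c(2) in_val[OF tw'] by blast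
      then have "sat Mod (?e(x := rep c)) \<psi>" using S satB by blast
      moreover have "(\<lambda>v. rep ((\<rho>(x := c)) v)) = ?e(x := rep c)" by auto
      ultimately have "subst (\<lambda>v. Var ((\<rho>(x := c)) v)) \<psi> \<in> FF"
        using BAll.IH[OF W\<psi> cndu] cb by metis
      then have "subst (Var(x := Var c)) ?\<psi>' \<in> FF" using comp_x[OF hx sx] by simp
      then show False using c(3) mem_disj by blast
    qed
  next
    assume "subst (\<lambda>v. Var (\<rho> v)) (BAll x t \<psi>) \<in> FF"
    then have B: "BAll x ?t' ?\<psi>' \<in> FF" using eqs by simp
    show "sat Mod ?e (BAll x t \<psi>)"
      unfolding satB
    proof (intro ballI impI)
      fix a assume a: "a \<in> range rep" "Atom PIn [Var a, Var (val ?t')] \<in> FF"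
      obtain y where y: "a = rep y" using a by auto
      obtain b where b: "vEq b y \<in> FF" "b \<notin> bnd \<psi>" using class_avoid[of "bnd \<psi>" y] by auto
      have rb: "rep b = a" using b y rep_iff by blast
      have Ab: "Atom PIn [Var b, ?t'] \<in> FF" using in_val[OF tw'] rb a by simp
      obtain z where z: "z \<notin> fv \<psi> \<union> {x}" using fresh_var[of "fv \<psi> \<union> {x}"] by auto
      let ?c13 = "(Conj (vIn x z) (BAll x (Var z) \<psi>), \<psi>)"
      let ?\<sigma> = "(\<lambda>v. Var ((\<rho>(x := b)) v))(z := ?t')"
      have ax: "?c13 \<in> T \<union> logax FA PA" using W\<psi> by (auto intro: logax.P13)
      have ag1: "\<forall>v\<in>fv \<psi>. (?\<sigma>(x := Var x)) v = (\<lambda>v. Var ((\<rho>(x := x)) v)) v" using z by auto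
      have ag2: "\<forall>v\<in>fv \<psi>. ?\<sigma> v = (\<lambda>v. Var ((\<rho>(x := b)) v)) v" using z by auto
      have e1: "subst ?\<sigma> (fst ?c13) = Conj (Atom PIn [Var b, ?t']) (BAll x ?t' ?\<psi>')"
      proof -
        have q: "subst (?\<sigma>(x := Var x)) \<psi> = ?\<psi>'" by (rule subst_cong) (use z in auto)
        show ?thesis by (simp only: fst_conv subst.simps tsubst.simps list.map q) (use z in simp)
      qed
      have e2: "subst ?\<sigma> (snd ?c13) = subst (\<lambda>v. Var ((\<rho>(x := b)) v)) \<psi>"
        by (simp only: snd_conv, rule subst_cong) (use z in auto)
      have tws: "\<forall>v. twf FA (?\<sigma> v)" using tw' by auto
      have "der (subst ?\<sigma> (fst ?c13)) (subst ?\<sigma> (snd ?c13))"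
      proof (rule der_ax[OF ax])
        have "substble (?\<sigma>(x := Var x)) \<psi>" using iffD2[OF substble_cong[OF ag1] sx] .
        moreover have "\<forall>v\<in>fv \<psi> - {x}. x \<notin> tvars (?\<sigma> v)" using hx z by auto
        ultimately show "substble ?\<sigma> (fst ?c13)" by simp
        have "substble (\<lambda>v. Var ((\<rho>(x := b)) v)) \<psi>" by (rule cnd_substble[OF cndu]) (use b in simp)
        then have "substble ?\<sigma> \<psi>" using iffD2[OF substble_cong[OF ag2]] by blast
        then show "substble ?\<sigma> (snd ?c13)" by (simp only: snd_conv)
        show "W (subst ?\<sigma> (fst ?c13))" using W\<psi> tws by (intro fwf_subst) auto
        show "W (subst ?\<sigma> (snd ?c13))" using W\<psi> tws by (intro fwf_subst) auto
      qed
      then have d: "der (Conj (Atom PIn [Var b, ?t']) (BAll x ?t' ?\<psi>')) (subst (\<lambda>v. Var ((\<rho>(x := b)) v)) \<psi>)"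
        using e1 e2 by simp
      have "Conj (Atom PIn [Var b, ?t']) (BAll x ?t' ?\<psi>') \<in> FF"
        using Ab B W_der1[OF d] Conj_FF by blast
      then have "subst (\<lambda>v. Var ((\<rho>(x := b)) v)) \<psi> \<in> FF" using FF_der d by blast
      then have "sat Mod (\<lambda>v. rep ((\<rho>(x := b)) v)) \<psi>" using BAll.IH[OF W\<psi> cndu] b by blast
      moreover have "(\<lambda>v. rep ((\<rho>(x := b)) v)) = ?e(x := a)" using rb by auto
      ultimately show "sat Mod (?e(x := a)) \<psi>" by simp
    qed
  qed
qed

end


context L2 begin

lemma rep_range: "a \<in> range rep \<Longrightarrow> rep a = a"
  using rep_rep by auto

lemma admissible_Mod: "admissible FA Mod"
  unfolding admissible_def is_structure_def
proof (intro conjI ballI allI impI)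
  show "dom Mod \<noteq> {}" by simp
  fix f as show "fint Mod f as \<in> dom Mod" by (simp add: val_def)
next
  fix a b assume a: "a \<in> dom Mod" and b: "b \<in> dom Mod"
  have ra: "rep a = a" using rep_range[of a] a by (simp only: Mod_simps)
  have rb: "rep b = b" using rep_range[of b] b by (simp only: Mod_simps)
  have eq: "vEq a b \<in> FF \<longleftrightarrow> a = b" using rep_iff[of a b] ra rb by simp
  show "pint Mod PEq [a, b] = (a = b)" using eq by simp
  have "der Top (Disj (vEq a b) (vNeq a b))" using der_ax0[OF logax.P18[of a b]] by simp
  then have "Disj (vEq a b) (vNeq a b) \<in> FF" using FF_der[OF Top_FF] by blast
  then have d1: "vEq a b \<in> FF \<or> vNeq a b \<in> FF" using Disj_FF[of "vEq a b" "vNeq a b"] by simp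
  have d2: "\<not> (vEq a b \<in> FF \<and> vNeq a b \<in> FF)"
  proof
    assume "vEq a b \<in> FF \<and> vNeq a b \<in> FF"
    then have "Conj (vEq a b) (vNeq a b) \<in> FF" using Conj_FF[of "vEq a b" "vNeq a b"] by simp
    then have "Bot \<in> FF" using FF_der der_ax0[OF logax.P19[of a b]] by simp
    then show False using Bot_FF by blast
  qed
  show "pint Mod PNeq [a, b] = (a \<noteq> b)" using d1 d2 eq by auto
  have "der Top (Disj (vIn a b) (vNotin a b))" using der_ax0[OF logax.P16[of a b]] by simp
  then have "Disj (vIn a b) (vNotin a b) \<in> FF" using FF_der[OF Top_FF] by blast
  then have i1: "vIn a b \<in> FF \<or> vNotin a b \<in> FF" using Disj_FF[of "vIn a b" "vNotin a b"] by simp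
  have i2: "\<not> (vIn a b \<in> FF \<and> vNotin a b \<in> FF)"
  proof
    assume "vIn a b \<in> FF \<and> vNotin a b \<in> FF"
    then have "Conj (vIn a b) (vNotin a b) \<in> FF" using Conj_FF[of "vIn a b" "vNotin a b"] by simp
    then have "Bot \<in> FF" using FF_der der_ax0[OF logax.P17[of a b]] by simp
    then show False using Bot_FF by blast
  qed
  show "pint Mod PNotin [a, b] = (\<not> pint Mod PIn [a, b])" using i1 i2 by auto
qed

lemma models_T: "c \<in> T \<Longrightarrow> models_cond Mod c"
  unfolding models_cond_def
proof (intro allI impI)
  fix e assume c: "c \<in> T" and e: "assignment Mod e" and s: "sat Mod e (fst c)"
  let ?B = "bnd (fst c) \<union> bnd (snd c)"
  define \<rho> where "\<rho> v = (SOME b. vEq b (e v) \<in> FF \<and> b \<notin> ?B)" for v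
  have \<rho>: "vEq (\<rho> v) (e v) \<in> FF \<and> \<rho> v \<notin> ?B" for v
  proof -
    have "\<exists>b. vEq b (e v) \<in> FF \<and> b \<notin> ?B" using class_avoid[of ?B "e v"] finite_bnd finite_Un by blast
    then show ?thesis unfolding \<rho>_def by (rule someI_ex)
  qed
  have ee: "(\<lambda>v. rep (\<rho> v)) = e"
  proof (rule ext)
    fix v
    have "e v \<in> dom Mod" using e unfolding assignment_def by blast
    then have "e v \<in> range rep" by (simp only: Mod_simps)
    moreover have "rep (\<rho> v) = rep (e v)" using rep_iff[THEN iffD2, OF conjunct1[OF \<rho>[of v]]] .
    ultimately show "rep (\<rho> v) = e v" using rep_range[of "e v"] by simp
  qed
  have W1: "W (fst c)" and W2: "W (snd c)" using WT c by blast+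
  have c1: "cnd (fst c) \<rho>" and c2: "cnd (snd c) \<rho>" unfolding cnd_def using \<rho> by blast+
  have "subst (\<lambda>v. Var (\<rho> v)) (fst c) \<in> FF" using truth[OF W1 c1] s ee by simp
  moreover have "der (subst (\<lambda>v. Var (\<rho> v)) (fst c)) (subst (\<lambda>v. Var (\<rho> v)) (snd c))"
  proof (rule der_ax)
    show "c \<in> T \<union> logax FA PA" using c by simp
    show "substble (\<lambda>v. Var (\<rho> v)) (fst c)" by (rule cnd_substble[OF c1])
    show "substble (\<lambda>v. Var (\<rho> v)) (snd c)" by (rule cnd_substble[OF c2])
    show "W (subst (\<lambda>v. Var (\<rho> v)) (fst c))" using W1 by (intro fwf_subst) auto
    show "W (subst (\<lambda>v. Var (\<rho> v)) (snd c))" using W2 by (intro fwf_subst) auto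
  qed
  ultimately have "subst (\<lambda>v. Var (\<rho> v)) (snd c) \<in> FF" using FF_der by blast
  then show "sat Mod e (snd c)" using truth[OF W2 c2] ee by simp
qed

lemma countermodel:
  "\<exists>M. admissible FA M \<and> (\<forall>c \<in> T. models_cond M c) \<and>
              (\<exists>e. assignment M e \<and> sat M e \<chi> \<and> \<not> sat M e \<chi>')"
proof (intro exI conjI)
  show "admissible FA Mod" by (rule admissible_Mod)
  show "\<forall>c\<in>T. models_cond Mod c" using models_T by blast
  show "assignment Mod rep" unfolding assignment_def by simp
  have id: "(\<lambda>v. Var v) = Var" by auto
  have cn: "cnd \<phi> (\<lambda>v. v)" for \<phi> :: "('f, 'p) fm" unfolding cnd_def by simp
  have "\<chi> \<in> FF" using stage_sub(1)[of 0] by simp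
  then show "sat Mod rep \<chi>" using truth[OF W\<chi> cn] id by simp
  have "\<chi>' \<in> GG" using stage_sub(2)[of 0] by simp
  then have "\<chi>' \<notin> FF" using mem_disj by blast
  then show "\<not> sat Mod rep \<chi>'" using truth[OF W\<chi>' cn] id by simp
qed

end

theorem mainTheorem2:
  fixes FA :: "'f::countable \<Rightarrow> nat" and PA :: "'p::countable \<Rightarrow> nat"
    and T :: "('f, 'p) cond set" and \<chi> \<chi>' :: "('f, 'p) fm"
  assumes "\<forall>c \<in> T. fwf FA PA (fst c) \<and> fwf FA PA (snd c)"
    and "fwf FA PA \<chi>" and "fwf FA PA \<chi>'"
  shows "fp_provable FA PA T \<chi> \<chi>' \<or>
         (\<exists>M. admissible FA M \<and> (\<forall>c \<in> T. models_cond M c) \<and>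
              (\<exists>e. assignment M e \<and> sat M e \<chi> \<and> \<not> sat M e \<chi>'))"
proof (cases "L.der FA PA T \<chi> \<chi>'")
  case True
  then show ?thesis using L.der_fp by blast
next
  case False
  interpret L2 FA PA T \<chi> \<chi>' using assms False by unfold_locales auto
  show ?thesis using countermodel by blast
qed


end
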